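(* For every $-\frac32<\beta<0<\gamma<\alpha<\frac32$ there exists $C>0$ such that for every $f:\mathbb T^2\to\mathbb R$, $$[f]_\gamma\le C[f]_\beta^\lambda[f]_\alpha^{1-\lambda},$$ where $\lambda\in(0,1)$ is given by $\gamma=\lambda\beta+(1-\lambda)\alpha$. If $f$ has vanishing average on $\mathbb T^2$, the inequality also holds for $\gamma=0$ with $[f]_\gamma$ replaced by $\|f\|_{L^\infty}$.
   Context: $\mathbb T^2=[0,1)^2$, $d(x,y)=|x_1-y_1|+|x_2-y_2|^{2/3}$. For $\alpha\in(0,1]$, $[f]_\alpha=\sup_{x\ne y}|f(y)-f(x)|/d^\alpha(y,x)$; for $\alpha\in(1,\frac32)$, $[f]_\alpha=\sup_{x\ne y}|f(y)-f(x)-\partial_1f(x)(y-x)_1|/d^\alpha(y,x)$. For a periodic distribution $f$ and $\beta\in(-1,0)$, $[f]_\beta=\inf\{|c|+[g]_{\beta+1}+[h]_{\beta+3/2}:f=c+\partial_1g+\partial_2h\}$; for $\beta\in(-\frac32,-1]$, $[f]_\beta=\inf\{|c|+[g]_{\beta+2}+[h]_{\beta+3/2}:f=c+\partial_1^2g+\partial_2h\}$. *)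

theory Defs
  imports "HOL-Analysis.Analysis"
begin

text \<open>Functions on the torus are represented as 1-periodic functions on the plane.\<close>

definition periodic2 :: "(real \<times> real \<Rightarrow> real) \<Rightarrow> bool" where
  "periodic2 f \<longleftrightarrow> (\<forall>a b. f (a + 1, b) = f (a, b) \<and> f (a, b + 1) = f (a, b))"

definition dT :: "real \<times> real \<Rightarrow> real \<times> real \<Rightarrow> real" where
  "dT x y = \<bar>fst x - fst y\<bar> + \<bar>snd x - snd y\<bar> powr (2/3)"

definition part1 :: "(real \<times> real \<Rightarrow> real) \<Rightarrow> real \<times> real \<Rightarrow> real" where
  "part1 f x = deriv (\<lambda>t. f (t, snd x)) (fst x)"

definition part2 :: "(real \<times> real \<Rightarrow> real) \<Rightarrow> real \<times> real \<Rightarrow> real" where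
  "part2 f x = deriv (\<lambda>t. f (fst x, t)) (snd x)"

definition has_part1 :: "(real \<times> real \<Rightarrow> real) \<Rightarrow> bool" where
  "has_part1 f \<longleftrightarrow> (\<forall>x. (\<lambda>t. f (t, snd x)) differentiable (at (fst x)))"

definition has_part2 :: "(real \<times> real \<Rightarrow> real) \<Rightarrow> bool" where
  "has_part2 f \<longleftrightarrow> (\<forall>x. (\<lambda>t. f (fst x, t)) differentiable (at (snd x)))"

text \<open>C^infinity: all iterated partial derivatives exist and are continuous.\<close>
definition smooth2 :: "(real \<times> real \<Rightarrow> real) \<Rightarrow> bool" where
  "smooth2 \<phi> \<longleftrightarrow> (\<exists>S. \<phi> \<in> S \<and> (\<forall>\<psi>\<in>S. continuous_on UNIV \<psi> \<and> has_part1 \<psi> \<and> has_part2 \<psi>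
       \<and> part1 \<psi> \<in> S \<and> part2 \<psi> \<in> S))"

definition holder_quot :: "real \<Rightarrow> (real \<times> real \<Rightarrow> real) \<Rightarrow> real \<times> real \<Rightarrow> real \<times> real \<Rightarrow> real" where
  "holder_quot \<alpha> f x y =
     (if \<alpha> \<le> 1 then \<bar>f y - f x\<bar> else \<bar>f y - f x - part1 f x * (fst y - fst x)\<bar>) / (dT y x powr \<alpha>)"

definition holder_fin :: "real \<Rightarrow> (real \<times> real \<Rightarrow> real) \<Rightarrow> bool" where
  "holder_fin \<alpha> f \<longleftrightarrow> (1 < \<alpha> \<longrightarrow> has_part1 f) \<and> bdd_above {holder_quot \<alpha> f x y | x y. x \<noteq> y}"

definition holder_sn :: "real \<Rightarrow> (real \<times> real \<Rightarrow> real) \<Rightarrow> real" where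
  "holder_sn \<alpha> f = Sup {holder_quot \<alpha> f x y | x y. x \<noteq> y}"

abbreviation unitsq :: "(real \<times> real) set" where
  "unitsq \<equiv> cbox (0, 0) (1, 1)"

text \<open>Distributional identities f = c + d1 g + d2 h and f = c + d1^2 g + d2 h,
  tested against smooth periodic test functions.\<close>
definition decomp1 :: "(real \<times> real \<Rightarrow> real) \<Rightarrow> real \<Rightarrow> (real \<times> real \<Rightarrow> real) \<Rightarrow> (real \<times> real \<Rightarrow> real) \<Rightarrow> bool" where
  "decomp1 f c g h \<longleftrightarrow> (\<forall>\<phi>. smooth2 \<phi> \<and> periodic2 \<phi> \<longrightarrow>
     integral unitsq (\<lambda>x. f x * \<phi> x) =
       c * integral unitsq \<phi> - integral unitsq (\<lambda>x. g x * part1 \<phi> x)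
         - integral unitsq (\<lambda>x. h x * part2 \<phi> x))"

definition decomp2 :: "(real \<times> real \<Rightarrow> real) \<Rightarrow> real \<Rightarrow> (real \<times> real \<Rightarrow> real) \<Rightarrow> (real \<times> real \<Rightarrow> real) \<Rightarrow> bool" where
  "decomp2 f c g h \<longleftrightarrow> (\<forall>\<phi>. smooth2 \<phi> \<and> periodic2 \<phi> \<longrightarrow>
     integral unitsq (\<lambda>x. f x * \<phi> x) =
       c * integral unitsq \<phi> + integral unitsq (\<lambda>x. g x * part1 (part1 \<phi>) x)
         - integral unitsq (\<lambda>x. h x * part2 \<phi> x))"

text \<open>Admissible values |c| + [g] + [h] for the negative seminorm, beta in (-3/2,0).\<close>
definition neg_set :: "real \<Rightarrow> (real \<times> real \<Rightarrow> real) \<Rightarrow> real set" where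
  "neg_set \<beta> f =
    (if -1 < \<beta> then
       {\<bar>c\<bar> + holder_sn (\<beta> + 1) g + holder_sn (\<beta> + 3/2) h | c g h.
          periodic2 g \<and> periodic2 h \<and> holder_fin (\<beta> + 1) g \<and> holder_fin (\<beta> + 3/2) h \<and> decomp1 f c g h}
     else
       {\<bar>c\<bar> + holder_sn (\<beta> + 2) g + holder_sn (\<beta> + 3/2) h | c g h.
          periodic2 g \<and> periodic2 h \<and> holder_fin (\<beta> + 2) g \<and> holder_fin (\<beta> + 3/2) h \<and> decomp2 f c g h})"

definition neg_fin :: "real \<Rightarrow> (real \<times> real \<Rightarrow> real) \<Rightarrow> bool" where
  "neg_fin \<beta> f \<longleftrightarrow> neg_set \<beta> f \<noteq> {}"

definition neg_sn :: "real \<Rightarrow> (real \<times> real \<Rightarrow> real) \<Rightarrow> real" where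
  "neg_sn \<beta> f = Inf (neg_set \<beta> f)"

definition sup_norm :: "(real \<times> real \<Rightarrow> real) \<Rightarrow> real" where
  "sup_norm f = Sup (range (\<lambda>x. \<bar>f x\<bar>))"

end

theory Submission
  imports Defs
begin
fun J :: "nat \<Rightarrow> real" where
  "J 0 = 1" | "J (Suc m) = J m * (2*m+1)/(2*m+2)"

lemma J_pos: "J m > 0" by (induct m) auto

lemma ftc_per:
  fixes F F' :: "real \<Rightarrow> real"
  assumes "\<And>v. (F has_real_derivative F' v) (at v)" "F 1 = F 0"
  shows "(F' has_integral 0) {0..1}"
proof -
  have "(F' has_integral (F 1 - F 0)) {0..1}"
    apply (rule fundamental_theorem_of_calculus)
     apply simp
    using assms(1) by (metis has_field_derivative_at_within has_real_derivative_iff_has_vector_derivative)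
  then show ?thesis using assms(2) by simp
qed

lemma wallis_alg:
  fixes c sn :: real
  assumes "sn^2 = 1 - c^2"
  shows "real (2*m+1) * c^(2*m) * (- sn * pi) * sn + (c*pi) * c^(2*m+1)
     = pi*(real (2*m+2)*c^(2*m+2) - real (2*m+1)*c^(2*m))"
proof -
  have h1: "c^(2*m+1) = c^(2*m)*c" by (simp add: mult.commute)
  have h2: "c^(2*m+2) = c^(2*m)*c^2" by (rule power_add)
  have h3: "real (2*m+1) = 2*real m + 1" "real (2*m+2) = 2*real m + 2" by simp_all
  have g: "k' = k + 1 \<Longrightarrow> k * P * (- sn * pi) * sn + c * pi * (P * c) = pi * (k' * (P * c^2) - k * P)" for P k k' :: real
    using assms by algebra
  show ?thesis unfolding h1 h2 h3 by (rule g) simp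
qed

lemma wallis: "((\<lambda>v. cos (pi*(v-s))^(2*m)) has_integral J m) {0..1}"
proof (induct m)
  case 0
  then show ?case using has_integral_const_real[of "1::real" 0 1] by simp
next
  case (Suc m)
  define F where "F = (\<lambda>v. cos (pi*(v-s))^(2*m+1) * sin (pi*(v-s)))"
  define F' where "F' v = pi*(real (2*m+2)*cos (pi*(v-s))^(2*m+2) - real (2*m+1)*cos (pi*(v-s))^(2*m))" for v
  have d: "(F has_real_derivative F' v) (at v)" for v
  proof -
    have d0: "(F has_real_derivative (real (2*m+1) * cos (pi*(v-s))^(2*m) * (- sin (pi*(v-s)) * pi) * sin (pi*(v-s))
        + (cos (pi*(v-s))*pi) * cos (pi*(v-s))^(2*m+1))) (at v)"
    proof -
      have c: "((\<lambda>v. cos (pi*(v-s))) has_real_derivative (- sin (pi*(v-s)) * pi)) (at v)"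
        by (auto intro!: derivative_eq_intros)
      have sn: "((\<lambda>v. sin (pi*(v-s))) has_real_derivative (cos (pi*(v-s)) * pi)) (at v)"
        by (auto intro!: derivative_eq_intros)
      have e: "of_nat (2*m+1) * ((- sin (pi*(v-s)) * pi) * cos (pi*(v-s))^(2*m+1-Suc 0)) = real (2*m+1) * cos (pi*(v-s))^(2*m) * (- sin (pi*(v-s)) * pi)"
        by simp
      have p: "((\<lambda>v. cos (pi*(v-s))^(2*m+1)) has_real_derivative (real (2*m+1) * cos (pi*(v-s))^(2*m) * (- sin (pi*(v-s)) * pi))) (at v)"
        using DERIV_power[OF c, of "2*m+1"] unfolding e .
      show ?thesis unfolding F_def by (rule DERIV_mult[OF p sn])
    qed
    have sq: "sin (pi*(v-s))^2 = 1 - cos (pi*(v-s))^2" by (simp add: sin_squared_eq)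
    show ?thesis using d0 unfolding wallis_alg[OF sq] F'_def .
  qed
  have per: "F 1 = F 0"
  proof -
    have a: "pi*(1-s) = pi + pi*(-s)" by (simp add: algebra_simps)
    show ?thesis unfolding F_def a by (simp add: cos_add sin_add)
  qed
  have i0: "(F' has_integral 0) {0..1}" by (rule ftc_per[OF d per])
  have eq: "cos (pi*(v-s))^(2*Suc m) = (F' v / pi + (2*m+1) * cos (pi*(v-s))^(2*m)) / (2*m+2)" for v
  proof -
    have "F' v / pi + (2*m+1) * cos (pi*(v-s))^(2*m) = real (2*m+2) * cos (pi*(v-s))^(2*m+2)"
      unfolding F'_def by simp
    then show ?thesis by (simp del: of_nat_add of_nat_mult add: mult_2)
  qed
  have "((\<lambda>v. (F' v / pi + (2*m+1) * cos (pi*(v-s))^(2*m)) / (2*m+2)) has_integral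
        ((0 / pi + (2*m+1) * J m) / (2*m+2))) {0..1}"
    by (intro has_integral_divide has_integral_add has_integral_mult_right i0 Suc)
  then show ?case unfolding eq by (simp add: field_simps)
qed

definition sgw :: "real \<Rightarrow> real" where "sgw v = abs (sin (pi * v))"
definition kc :: "nat \<Rightarrow> real \<Rightarrow> real" where "kc n v = cos (pi * v)^(2*n) / J n"
definition kd :: "nat \<Rightarrow> real \<Rightarrow> real" where
  "kd n v = - (2*real n*pi / J n) * (cos (pi * v)^(2*n-1) * sin (pi * v))"
definition kdd :: "nat \<Rightarrow> real \<Rightarrow> real" where
  "kdd n v = (2*real n*pi^2 / J n) * ((2*real n - 1) * sin (pi * v)^2 * cos (pi * v)^(2*n-2) - cos (pi * v)^(2*n))"
definition sw :: "real \<Rightarrow> real" where "sw v = sin (2*pi * v) / (2*pi)"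

lemma cos_d: "((\<lambda>v. cos (pi * v)) has_real_derivative (- sin (pi * v) * pi)) (at v)"
  by (auto intro!: derivative_eq_intros)
lemma sin_d: "((\<lambda>v. sin (pi * v)) has_real_derivative (cos (pi * v) * pi)) (at v)"
  by (auto intro!: derivative_eq_intros)

lemma kc_deriv: "(kc n has_real_derivative kd n v) (at v)"
proof (cases n)
  case 0
  have "kc n = (\<lambda>v. 1)" using 0 by (auto simp: kc_def)
  then show ?thesis using 0 by (simp add: kd_def)
next
  case (Suc k)
  have p: "((\<lambda>v. cos (pi * v)^(2*k+2)) has_real_derivative
     (of_nat (2*k+2) * ((- sin (pi * v) * pi) * cos (pi * v)^(2*k+2 - Suc 0)))) (at v)"
    by (rule DERIV_power[OF cos_d])
  have q: "((\<lambda>v. cos (pi * v)^(2*k+2) / J n) has_real_derivative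
     (of_nat (2*k+2) * ((- sin (pi * v) * pi) * cos (pi * v)^(2*k+2 - Suc 0))) / J n) (at v)"
    by (rule DERIV_cdivide[OF p])
  have e1: "kc n = (\<lambda>v. cos (pi * v)^(2*k+2) / J n)" using Suc by (auto simp: kc_def)
  have e2: "(of_nat (2*k+2) * ((- sin (pi * v) * pi) * cos (pi * v)^(2*k+2 - Suc 0))) / J n = kd n v"
  proof -
    have a: "2*n-1 = 2*k+1" "2*k+2 - Suc 0 = 2*k+1" "real (2*k+2) = 2*real n" using Suc by auto
    define X where "X = cos (pi * v)^(2*k+1)"
    have "real (2*k+2) * ((- sin (pi * v) * pi) * X) / J n = - (2*real n*pi / J n) * (X * sin (pi * v))"
      unfolding a by (simp add: field_simps)
    then show ?thesis unfolding kd_def a X_def .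
  qed
  show ?thesis using q unfolding e1 e2 .
qed

lemma kd_alg:
  fixes c sn P C :: real
  assumes "sn^2 = 1 - c^2"
  shows "- C * (real (2*k+1) * ((- sn * pi) * P) * sn + (c * pi) * (c * P))
     = C * pi * ((2*real k + 1) * sn^2 * P - c * c * P)"
proof -
  have h: "real (2*k+1) = 2*real k + 1" by simp
  show ?thesis unfolding h by algebra
qed

lemma kd_deriv: "(kd n has_real_derivative kdd n v) (at v)"
proof (cases n)
  case 0
  have "kd n = (\<lambda>v. 0)" using 0 by (auto simp: kd_def)
  then show ?thesis using 0 by (simp add: kdd_def)
next
  case (Suc k)
  define C where "C = 2*real n*pi / J n"
  have p: "((\<lambda>v. cos (pi * v)^(2*k+1)) has_real_derivative
     (of_nat (2*k+1) * ((- sin (pi * v) * pi) * cos (pi * v)^(2*k+1 - Suc 0)))) (at v)"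
    by (rule DERIV_power[OF cos_d])
  have p2: "((\<lambda>v. cos (pi * v)^(2*k+1)) has_real_derivative
     (real (2*k+1) * ((- sin (pi * v) * pi) * cos (pi * v)^(2*k)))) (at v)"
    using p by simp
  have q: "((\<lambda>v. - C * (cos (pi * v)^(2*k+1) * sin (pi * v))) has_real_derivative
     - C * (real (2*k+1) * ((- sin (pi * v) * pi) * cos (pi * v)^(2*k)) * sin (pi * v) + (cos (pi * v) * pi) * cos (pi * v)^(2*k+1))) (at v)"
    by (intro DERIV_cmult DERIV_mult p2 sin_d)
  have e1: "kd n = (\<lambda>v. - C * (cos (pi * v)^(2*k+1) * sin (pi * v)))" using Suc by (auto simp: kd_def C_def)
  have sq: "sin (pi * v)^2 = 1 - cos (pi * v)^2" by (simp add: sin_squared_eq)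
  have c1: "cos (pi * v)^(2*k+1) = cos (pi * v) * cos (pi * v)^(2*k)" by simp
  have e2: "- C * (real (2*k+1) * ((- sin (pi * v) * pi) * cos (pi * v)^(2*k)) * sin (pi * v) + (cos (pi * v) * pi) * cos (pi * v)^(2*k+1))
      = C * pi * ((2*real k + 1) * sin (pi * v)^2 * cos (pi * v)^(2*k) - cos (pi * v) * cos (pi * v) * cos (pi * v)^(2*k))"
    unfolding c1 by (rule kd_alg[OF sq])
  have e3: "C * pi * ((2*real k + 1) * sin (pi * v)^2 * cos (pi * v)^(2*k) - cos (pi * v) * cos (pi * v) * cos (pi * v)^(2*k)) = kdd n v"
  proof -
    have a: "2*n-2 = 2*k" "2*real n - 1 = 2*real k + 1" using Suc by auto
    have b: "cos (pi * v)^(2*n) = cos (pi * v) * cos (pi * v) * cos (pi * v)^(2*k)" using Suc by simp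
    define E where "E = (2*real k + 1) * sin (pi * v)^2 * cos (pi * v)^(2*k) - cos (pi * v) * cos (pi * v) * cos (pi * v)^(2*k)"
    have "C * pi * E = (2*real n*pi^2 / J n) * E" unfolding C_def by (simp add: power2_eq_square)
    then show ?thesis unfolding kdd_def a b E_def .
  qed
  show ?thesis using q unfolding e1 e2 e3 .
qed

lemma J_nz[simp]: "J n \<noteq> 0" using J_pos[of n] by simp

lemma kc_per: "kc n (v + 1) = kc n v"
proof -
  have "pi * (v+1) = pi * v + pi" by (simp add: algebra_simps)
  then show ?thesis by (simp add: kc_def power_mult)
qed

lemma kd_per: "kd n (v + 1) = kd n v"
proof (cases n)
  case 0 then show ?thesis by (simp add: kd_def)
next
  case (Suc k)
  have "pi * (v+1) = pi * v + pi" by (simp add: algebra_simps)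
  moreover have "2*n - 1 = Suc (2*k)" using Suc by simp
  ultimately show ?thesis by (simp add: kd_def)
qed

lemma cont_kc: "continuous_on UNIV (kc n)" unfolding kc_def[abs_def] by (intro continuous_intros) auto
lemma cont_kd: "continuous_on UNIV (kd n)" unfolding kd_def[abs_def] by (intro continuous_intros)
lemma cont_kdd: "continuous_on UNIV (kdd n)" unfolding kdd_def[abs_def] by (intro continuous_intros)
lemma cont_sgw: "continuous_on UNIV sgw" unfolding sgw_def[abs_def] by (intro continuous_intros)
lemma cont_sw: "continuous_on UNIV sw" unfolding sw_def[abs_def] by (intro continuous_intros) auto

lemma shift_deriv:
  assumes "\<And>u. (f has_real_derivative f' u) (at u)"
  shows "((\<lambda>v. f (v - s)) has_real_derivative f' (v - s)) (at v)"
proof -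
  have "((\<lambda>v. v - s) has_real_derivative 1) (at v)" by (auto intro!: derivative_eq_intros)
  from DERIV_chain2[OF assms this] show ?thesis by simp
qed

lemma I1: "((\<lambda>v. kc n (v - s)) has_integral 1) {0..1}"
proof -
  have "((\<lambda>v. cos (pi*(v-s))^(2*n) / J n) has_integral J n / J n) {0..1}"
    by (intro has_integral_divide wallis)
  then show ?thesis using J_pos[of n] by (simp add: kc_def)
qed

lemma I2: "((\<lambda>v. sin (pi*(v-s))^2 * cos (pi*(v-s))^(2*n)) has_integral (J n - J (Suc n))) {0..1}"
proof -
  have e: "sin (pi*(v-s))^2 * cos (pi*(v-s))^(2*n) = cos (pi*(v-s))^(2*n) - cos (pi*(v-s))^(2*Suc n)" for v
  proof -
    have h: "cos (pi*(v-s))^(2*Suc n) = cos (pi*(v-s))^2 * cos (pi*(v-s))^(2*n)"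
      by (metis mult_Suc_right power_add)
    show ?thesis unfolding h sin_squared_eq by (simp add: algebra_simps)
  qed
  show ?thesis unfolding e by (intro has_integral_diff wallis)
qed

lemma I3: "((\<lambda>v. sin (pi*(v-s))^4 * cos (pi*(v-s))^(2*n)) has_integral
   (J n - 2 * J (Suc n) + J (Suc (Suc n)))) {0..1}"
proof -
  have e: "sin (pi*(v-s))^4 * cos (pi*(v-s))^(2*n) = cos (pi*(v-s))^(2*n) - 2 * cos (pi*(v-s))^(2*Suc n) + cos (pi*(v-s))^(2*Suc (Suc n))" for v
  proof -
    define c where "c = cos (pi*(v-s))"
    define P where "P = c^(2*n)"
    have h1: "c^(2*Suc n) = c^2 * P" unfolding P_def by (metis mult_Suc_right power_add)
    have h2: "c^(2*Suc (Suc n)) = c^2 * (c^2 * P)" unfolding P_def by (metis mult_Suc_right power_add)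
    have h3: "sin (pi*(v-s))^4 = (1 - c^2)^2" unfolding c_def
      by (metis (no_types) numeral_Bit0 power_add power2_eq_square sin_squared_eq)
    show ?thesis unfolding c_def[symmetric] P_def[symmetric] h1 h2 h3 by (simp add: algebra_simps power2_eq_square)
  qed
  show ?thesis unfolding e by (intro has_integral_diff has_integral_add has_integral_mult_right wallis)
qed

lemma I4a: "((\<lambda>v. kd n (v - s)) has_integral 0) {0..1}"
proof (rule ftc_per)
  show "((\<lambda>v. kc n (v - s)) has_real_derivative kd n (v - s)) (at v)" for v
    by (rule shift_deriv[OF kc_deriv])
  show "kc n (1 - s) = kc n (0 - s)" using kc_per[of n "-s"] by simp
qed

lemma I4b: "((\<lambda>v. kdd n (v - s)) has_integral 0) {0..1}"
proof (rule ftc_per)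
  show "((\<lambda>v. kd n (v - s)) has_real_derivative kdd n (v - s)) (at v)" for v
    by (rule shift_deriv[OF kd_deriv])
  show "kd n (1 - s) = kd n (0 - s)" using kd_per[of n "-s"] by simp
qed

lemma I5: "((\<lambda>v. sw (v - s) * kc n (v - s)) has_integral 0) {0..1}"
proof (rule ftc_per)
  define G where "G = (\<lambda>u. - (cos (pi * u)^(2*n+2)) / ((2*n+2) * pi^2 * J n))"
  have d: "(G has_real_derivative sw u * kc n u) (at u)" for u
  proof -
    have p: "((\<lambda>u. cos (pi * u)^(2*n+2)) has_real_derivative
       (of_nat (2*n+2) * ((- sin (pi * u) * pi) * cos (pi * u)^(2*n+2 - Suc 0)))) (at u)"
      by (rule DERIV_power[OF cos_d])
    have q: "(G has_real_derivative - (of_nat (2*n+2) * ((- sin (pi * u) * pi) * cos (pi * u)^(2*n+2 - Suc 0))) / ((2*n+2) * pi^2 * J n)) (at u)"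
      unfolding G_def by (intro DERIV_cdivide DERIV_minus p)
    have e: "- (of_nat (2*n+2) * ((- sin (pi * u) * pi) * cos (pi * u)^(2*n+2 - Suc 0))) / ((2*n+2) * pi^2 * J n)
       = sw u * kc n u"
    proof -
      have a: "2*n+2 - Suc 0 = Suc (2*n)" by simp
      have b: "sin (2*pi*u) = 2 * sin (pi * u) * cos (pi * u)" using sin_double[of "pi * u"] by (simp add: mult.assoc)
      have nz: "2*real n + 2 \<noteq> 0" using of_nat_0_le_iff[of n] by linarith
      have "- (of_nat (2*n+2) * ((- sin (pi * u) * pi) * cos (pi * u)^(2*n+2 - Suc 0))) / ((2*n+2) * pi^2 * J n)
         = ((2*real n + 2) * (sin (pi * u) * pi * cos (pi * u)^(Suc (2*n)))) / ((2*real n + 2) * (pi^2 * J n))"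
        unfolding a by (simp add: mult.assoc)
      also have "\<dots> = (sin (pi * u) * pi * cos (pi * u)^(Suc (2*n))) / (pi^2 * J n)"
        by (rule mult_divide_mult_cancel_left[OF nz])
      also have "\<dots> = sw u * kc n u"
        unfolding sw_def kc_def b by (simp add: field_simps power2_eq_square)
      finally show ?thesis .
    qed
    show ?thesis using q unfolding e .
  qed
  show "((\<lambda>v. G (v - s)) has_real_derivative sw (v - s) * kc n (v - s)) (at v)" for v
    by (rule shift_deriv[OF d])
  have "pi * (-s + 1) = pi * (-s) + pi" by (simp add: algebra_simps)
  then show "G (1 - s) = G (0 - s)" unfolding G_def by (simp add: power_mult)
qed

lemma pw:
  fixes y r e :: real
  assumes "0 \<le> y" "0 < r" "r \<le> 2" "0 < e"
  shows "y powr r \<le> e powr r + e powr (r-2) * y^2"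
proof (cases "y \<le> e")
  case True
  have "y powr r \<le> e powr r" by (rule powr_mono2) (use assms True in auto)
  moreover have "0 \<le> e powr (r-2) * y^2" by simp
  ultimately show ?thesis by linarith
next
  case False
  then have ye: "e < y" by simp
  have "y powr r = y powr (r-2) * y powr 2" by (simp add: powr_add[symmetric])
  also have "y powr 2 = y^2" using ye assms by (simp add: powr_numeral)
  also have "y powr (r-2) \<le> e powr (r-2)" by (rule powr_mono2') (use assms ye in auto)
  then have "y powr (r-2) * y^2 \<le> e powr (r-2) * y^2" by (simp add: mult_right_mono)
  finally show ?thesis using powr_ge_zero[of e r] by linarith
qed

lemma cont_sgw_pow: "0 < r \<Longrightarrow> continuous_on UNIV (\<lambda>v. sgw (v - s) powr r)"
  unfolding sgw_def by (intro continuous_on_powr' continuous_intros) auto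

lemma sgw_sq: "sgw v ^ 2 = sin (pi * v)^2" by (simp add: sgw_def)

lemma Jdiff: "J n - J (Suc n) = J n / (2*real n + 2)"
proof -
  have "2*real n + 2 \<noteq> 0" using of_nat_0_le_iff[of n] by linarith
  then show ?thesis by (simp add: field_simps)
qed

lemma epow:
  fixes m a :: real
  assumes "0 < m"
  shows "(m powr (-1/2)) powr a = m powr (-a/2)"
  by (simp add: powr_powr)

lemma M0:
  assumes "0 < r" "r \<le> 2"
  shows "integral {0..1} (\<lambda>v. sgw (v - s) powr r * kc n (v - s)) \<le> 2 * (2*real n+2) powr (-r/2)"
proof -
  define m where "m = 2*real n+2"
  have m0: "0 < m" unfolding m_def by (simp add: add_nonneg_pos)
  define e where "e = m powr (-1/2)"
  have e0: "0 < e" unfolding e_def using m0 by simp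
  define R where "R v = (e powr r * cos (pi*(v-s))^(2*n) + e powr (r-2) * (sin (pi*(v-s))^2 * cos (pi*(v-s))^(2*n))) / J n" for v
  have le: "sgw (v - s) powr r * kc n (v - s) \<le> R v" for v
  proof -
    have "sgw (v - s) powr r \<le> e powr r + e powr (r-2) * sgw (v - s)^2"
      by (rule pw) (use assms e0 in \<open>auto simp: sgw_def\<close>)
    moreover have "0 \<le> kc n (v - s)" by (simp add: kc_def J_pos less_imp_le power_mult)
    ultimately have "sgw (v - s) powr r * kc n (v - s) \<le> (e powr r + e powr (r-2) * sgw (v - s)^2) * kc n (v - s)"
      by (rule mult_right_mono)
    also have "\<dots> = R v" unfolding R_def kc_def sgw_sq by (simp add: algebra_simps add_divide_distrib)
    finally show ?thesis .
  qed
  have hR: "(R has_integral (e powr r * J n + e powr (r-2) * (J n - J (Suc n))) / J n) {0..1}"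
    unfolding R_def[abs_def]
    by (intro has_integral_divide has_integral_add has_integral_mult_right wallis I2)
  have int: "(\<lambda>v. sgw (v - s) powr r * kc n (v - s)) integrable_on {0..1}"
    by (intro integrable_continuous_interval continuous_on_mult continuous_on_subset[OF cont_sgw_pow[OF assms(1)]]
        continuous_on_compose2[OF cont_kc] continuous_intros) auto
  have "integral {0..1} (\<lambda>v. sgw (v - s) powr r * kc n (v - s)) \<le> integral {0..1} R"
    by (rule integral_le[OF int]) (use hR le in auto)
  also have "\<dots> = (e powr r * J n + e powr (r-2) * (J n - J (Suc n))) / J n"
    using hR by (rule integral_unique)
  also have "\<dots> = e powr r + e powr (r-2) / m"
    unfolding Jdiff m_def[symmetric] using m0 by (simp add: field_simps)
  also have "e powr (r-2) = e powr r * m"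
  proof -
    have "e powr (r-2) = e powr r * e powr (-2)" by (simp add: powr_add[symmetric])
    moreover have "e powr (-2) = m" unfolding e_def using m0 by (simp add: powr_powr)
    ultimately show ?thesis by simp
  qed
  also have "e powr r + e powr r * m / m = 2 * m powr (-r/2)"
    unfolding e_def using m0 by (simp add: powr_powr)
  finally show ?thesis unfolding m_def .
qed

lemma e_facts:
  fixes m :: real
  assumes "0 < m"
  shows "(m powr (-1/2)) powr (a-2) = (m powr (-1/2)) powr a * m"
proof -
  define e where "e = m powr (-1/2)"
  have "e powr (a-2) = e powr a * e powr (-2)" by (simp add: powr_add[symmetric])
  moreover have "e powr (-2) = m" unfolding e_def using assms by (simp add: powr_powr)
  ultimately show ?thesis unfolding e_def by simp
qed

lemma M1:
  assumes "0 < r" "r \<le> 1"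
  shows "integral {0..1} (\<lambda>v. sgw (v - s) powr r * \<bar>kd n (v - s)\<bar>) \<le> 6 * pi * (2*real n+2) powr ((1-r)/2)"
proof (cases n)
  case 0
  then show ?thesis by (simp add: kd_def)
next
  case (Suc k)
  define m where "m = 2*real n+2"
  have m0: "0 < m" unfolding m_def by (simp add: add_nonneg_pos)
  have mk: "m = 2*real k + 4" unfolding m_def Suc by simp
  define e where "e = m powr (-1/2)"
  have e0: "0 < e" unfolding e_def using m0 by simp
  define C where "C = 2*real n*pi / J n"
  have C0: "0 \<le> C" unfolding C_def by (simp add: J_pos less_imp_le)
  define R where "R v = C * (e powr (r+1) * cos (pi*(v-s))^(2*k) + e powr (r-1) * (sin (pi*(v-s))^2 * cos (pi*(v-s))^(2*k)))" for v
  have le: "sgw (v - s) powr r * \<bar>kd n (v - s)\<bar> \<le> R v" for v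
  proof -
    define c where "c = cos (pi*(v-s))"
    define sn where "sn = sin (pi*(v-s))"
    have a: "2*n-1 = 2*k+1" using Suc by simp
    have kdv: "\<bar>kd n (v - s)\<bar> = C * (\<bar>c\<bar>^(2*k+1) * \<bar>sn\<bar>)"
      unfolding kd_def a C_def c_def sn_def using J_pos[of n] by (simp add: abs_mult power_abs)
    have c1: "\<bar>c\<bar>^(2*k+1) \<le> c^(2*k)"
    proof -
      have "\<bar>c\<bar>^(2*k+1) = \<bar>c\<bar>^(2*k) * \<bar>c\<bar>" by simp
      also have "\<dots> \<le> \<bar>c\<bar>^(2*k) * 1" by (rule mult_left_mono) (auto simp: c_def)
      finally show ?thesis by (simp add: power_abs[symmetric] power_mult)
    qed
    have s1: "sgw (v - s) powr r * \<bar>sn\<bar> = \<bar>sn\<bar> powr (r+1)"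
      unfolding sgw_def sn_def by (simp add: powr_add)
    have s2: "\<bar>sn\<bar> powr (r+1) \<le> e powr (r+1) + e powr (r+1-2) * \<bar>sn\<bar>^2"
      by (rule pw) (use assms e0 in auto)
    have "sgw (v - s) powr r * \<bar>kd n (v - s)\<bar> = C * (\<bar>c\<bar>^(2*k+1) * \<bar>sn\<bar> powr (r+1))"
      unfolding kdv s1[symmetric] by (simp add: algebra_simps)
    also have "\<dots> \<le> C * (c^(2*k) * (e powr (r+1) + e powr (r+1-2) * \<bar>sn\<bar>^2))"
      by (intro mult_left_mono mult_mono c1 s2 C0) auto
    also have "\<dots> = R v" unfolding R_def c_def sn_def by (simp add: algebra_simps)
    finally show ?thesis .
  qed
  have hR: "(R has_integral C * (e powr (r+1) * J k + e powr (r-1) * (J k - J (Suc k)))) {0..1}"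
    unfolding R_def[abs_def]
    by (intro has_integral_mult_right has_integral_add wallis I2)
  have int: "(\<lambda>v. sgw (v - s) powr r * \<bar>kd n (v - s)\<bar>) integrable_on {0..1}"
    by (intro integrable_continuous_interval continuous_on_mult continuous_on_subset[OF cont_sgw_pow[OF assms(1)]]
        continuous_on_rabs continuous_on_compose2[OF cont_kd] continuous_intros) auto
  have "integral {0..1} (\<lambda>v. sgw (v - s) powr r * \<bar>kd n (v - s)\<bar>) \<le> integral {0..1} R"
    by (rule integral_le[OF int]) (use hR le in auto)
  also have "\<dots> = C * (e powr (r+1) * J k + e powr (r-1) * (J k - J (Suc k)))"
    using hR by (rule integral_unique)
  also have "e powr (r-1) = e powr (r+1) * m" unfolding e_def using e_facts[OF m0, of "r+1"] by simp
  finally have 1: "integral {0..1} (\<lambda>v. sgw (v - s) powr r * \<bar>kd n (v - s)\<bar>)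
      \<le> C * (e powr (r+1) * J k + e powr (r+1) * m * (J k - J (Suc k)))" .
  define E where "E = e powr (r+1)"
  have E0: "0 < E" unfolding E_def using e0 by simp
  have F1: "J k / J n = (2*real k+2)/(2*real k+1)" and F2: "(J k - J n) / J n = 1/(2*real k+1)"
  proof -
    have "2*real k + 1 \<noteq> 0" "2*real k + 2 \<noteq> 0" using of_nat_0_le_iff[of k] by linarith+
    note nz = this
    have Jn: "J n = J k * ((2*real k+1)/(2*real k+2))" unfolding Suc by (simp add: add.commute)
    show f1: "J k / J n = (2*real k+2)/(2*real k+1)" unfolding Jn by simp
    have "(J k - J n) / J n = J k / J n - 1" using J_nz[of n] by (simp add: diff_divide_distrib)
    also have "\<dots> = 1/(2*real k+1)" unfolding f1 using nz by (simp add: field_simps)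
    finally show "(J k - J n) / J n = 1/(2*real k+1)" .
  qed
  have 2: "C * (E * J k + E * m * (J k - J (Suc k))) = 2*real n*pi*E*(J k / J n) + 2*pi*E*m*(real n*((J k - J n) / J n))"
    unfolding C_def Suc[symmetric] by (simp del: J.simps add: field_simps)
  have 3: "2*real n*pi*E*(J k / J n) + 2*pi*E*m*(real n*((J k - J n) / J n)) \<le> pi * E * (6 * m)"
  proof -
    have k0: "0 \<le> real k" by simp
    have a1: "(2*real k+2)/(2*real k+1) \<le> 2" using k0 by (simp add: divide_le_eq)
    have a2: "real n * (1/(2*real k+1)) \<le> 1" unfolding Suc using k0 by (simp add: divide_le_eq)
    have pE: "0 \<le> pi * E" using E0 by simp
    have nE: "0 \<le> 2*real n*pi*E" using E0 by simp
    have b1: "2*real n*pi*E*(J k / J n) \<le> 2*real n*pi*E*2" unfolding F1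
      by (rule mult_left_mono[OF a1 nE])
    have mE: "0 \<le> 2*pi*E*m" using E0 m0 by simp
    have b2: "2*pi*E*m*(real n*((J k - J n) / J n)) \<le> 2*pi*E*m*1" unfolding F2
      by (rule mult_left_mono[OF a2 mE])
    have b3: "2*real n*pi*E*2 \<le> 2*pi*E*m"
    proof -
      have "real n * 2 \<le> m" unfolding mk Suc by simp
      from mult_left_mono[OF this, of "2*pi*E"] pE show ?thesis by (simp add: algebra_simps)
    qed
    have b4: "0 \<le> pi*E*m" using pE m0 by simp
    show ?thesis using b1 b2 b3 b4 by (simp add: algebra_simps del: J.simps)
  qed
  have 4: "6 * pi * (2*real n+2) powr ((1-r)/2) = pi * E * (6 * m)"
  proof -
    have "(2*real n+2) powr ((1-r)/2) = e powr (r-1)"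
    proof -
      have x: "(-1/2)*(r-1) = (1-r)/2" by (simp add: field_simps)
      show ?thesis unfolding e_def powr_powr x m_def by simp
    qed
    also have "\<dots> = E * m" unfolding E_def e_def using e_facts[OF m0, of "r+1"] by simp
    finally show ?thesis by simp
  qed
  show ?thesis using 1 2 3 4 unfolding E_def by linarith
qed

lemma abs_diff_le_sum: "0 \<le> (a::real) \<Longrightarrow> 0 \<le> b \<Longrightarrow> \<bar>a - b\<bar> \<le> a + b" by arith

lemma mult_div_self: "(a::real) \<noteq> 0 \<Longrightarrow> a * (x / a) = x" by simp

lemma M2:
  assumes "0 < r" "r \<le> 2"
  shows "integral {0..1} (\<lambda>v. sgw (v - s) powr r * \<bar>kdd n (v - s)\<bar>) \<le> 6 * pi^2 * (2*real n+2) powr (1 - r/2)"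
proof (cases n)
  case 0
  then show ?thesis by (simp add: kdd_def)
next
  case (Suc k)
  define m where "m = 2*real n+2"
  have m0: "0 < m" unfolding m_def by (simp add: add_nonneg_pos)
  have mk: "m = 2*real k + 4" unfolding m_def Suc by simp
  define e where "e = m powr (-1/2)"
  have e0: "0 < e" unfolding e_def using m0 by simp
  define C where "C = 2*real n*pi^2 / J n"
  have C0: "0 \<le> C" unfolding C_def by (simp add: J_pos less_imp_le)
  define R where "R v = C * ((2*real k+1) * (e powr r * (sin (pi*(v-s))^2 * cos (pi*(v-s))^(2*k))
      + e powr (r-2) * (sin (pi*(v-s))^4 * cos (pi*(v-s))^(2*k)))
      + e powr r * cos (pi*(v-s))^(2*n) + e powr (r-2) * (sin (pi*(v-s))^2 * cos (pi*(v-s))^(2*n)))" for v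
  have le: "sgw (v - s) powr r * \<bar>kdd n (v - s)\<bar> \<le> R v" for v
  proof -
    define c where "c = cos (pi*(v-s))"
    define sn where "sn = sin (pi*(v-s))"
    have a: "2*n-2 = 2*k" "2*real n - 1 = 2*real k+1" using Suc by auto
    have kv: "\<bar>kdd n (v - s)\<bar> \<le> C * ((2*real k+1) * sn^2 * c^(2*k) + c^(2*n))"
    proof -
      have "kdd n (v - s) = C * ((2*real k+1) * sn^2 * c^(2*k) - c^(2*n))"
        unfolding kdd_def a C_def c_def sn_def ..
      moreover have "0 \<le> (2*real k+1) * sn^2 * c^(2*k)" by (simp add: power_mult)
      moreover have "0 \<le> c^(2*n)" by (simp add: power_mult)
      ultimately have "\<bar>(2*real k+1) * sn^2 * c^(2*k) - c^(2*n)\<bar> \<le> (2*real k+1) * sn^2 * c^(2*k) + c^(2*n)"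
        and e: "\<bar>kdd n (v - s)\<bar> = C * \<bar>(2*real k+1) * sn^2 * c^(2*k) - c^(2*n)\<bar>"
        using C0 abs_diff_le_sum by (auto simp: abs_mult)
      then show ?thesis using C0 by (simp add: mult_left_mono)
    qed
    have s2: "sgw (v - s) powr r \<le> e powr r + e powr (r-2) * sn^2"
      using pw[of "sgw (v - s)" r e] assms e0 unfolding sgw_sq sn_def by (simp add: sgw_def)
    have "sgw (v - s) powr r * \<bar>kdd n (v - s)\<bar> \<le> (e powr r + e powr (r-2) * sn^2) * (C * ((2*real k+1) * sn^2 * c^(2*k) + c^(2*n)))"
      by (intro mult_mono s2 kv) auto
    also have "\<dots> = R v" unfolding R_def c_def[symmetric] sn_def[symmetric]
      by (simp add: algebra_simps power2_eq_square power4_eq_xxxx)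
    finally show ?thesis .
  qed
  have hR: "(R has_integral C * ((2*real k+1) * (e powr r * (J k - J (Suc k))
      + e powr (r-2) * (J k - 2 * J (Suc k) + J (Suc (Suc k))))
      + e powr r * J n + e powr (r-2) * (J n - J (Suc n)))) {0..1}"
    unfolding R_def[abs_def]
    by (intro has_integral_mult_right has_integral_add wallis I2 I3)
  have int: "(\<lambda>v. sgw (v - s) powr r * \<bar>kdd n (v - s)\<bar>) integrable_on {0..1}"
    by (intro integrable_continuous_interval continuous_on_mult continuous_on_subset[OF cont_sgw_pow[OF assms(1)]]
        continuous_on_rabs continuous_on_compose2[OF cont_kdd] continuous_intros) auto
  define E where "E = e powr r"
  have E0: "0 < E" unfolding E_def using e0 by simp
  have er: "e powr (r-2) = E * m" unfolding E_def e_def using e_facts[OF m0, of r] by simp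
  define Jn1 where "Jn1 = J (Suc n)"
  have "integral {0..1} (\<lambda>v. sgw (v - s) powr r * \<bar>kdd n (v - s)\<bar>) \<le> integral {0..1} R"
    by (rule integral_le[OF int]) (use hR le in auto)
  also have "\<dots> = C * ((2*real k+1) * (E * (J k - J n) + E * m * (J k - 2 * J n + Jn1))
      + E * J n + E * m * (J n - Jn1))"
    using integral_unique[OF hR] unfolding er E_def[symmetric] Jn1_def Suc by simp
  also have "\<dots> = 2*real n*pi^2*E * ((2*real k+1) * ((J k - J n)/J n + m * ((J k - 2 * J n + Jn1)/J n))
      + 1 + m * ((J n - Jn1)/J n))"
    unfolding C_def by (simp del: J.simps add: field_simps)
  also have "\<dots> = 2*real n*pi^2*E * 6"
  proof -
    have nz: "2*real k + 1 \<noteq> 0" "2*real k + 2 \<noteq> 0" "2*real k + 4 \<noteq> 0" using of_nat_0_le_iff[of k] by linarith+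
    have Jn: "J n = J k * ((2*real k+1)/(2*real k+2))" unfolding Suc by (simp add: add.commute)
    have Jn1: "Jn1 = J n * ((2*real k+3)/(2*real k+4))" unfolding Jn1_def Suc by (simp add: add.commute)
    have f1: "J k / J n = (2*real k+2)/(2*real k+1)" unfolding Jn by simp
    have f2: "Jn1 / J n = (2*real k+3)/(2*real k+4)" unfolding Jn1 by simp
    have d: "(J k - J n)/J n = J k / J n - 1" "(J k - 2 * J n + Jn1)/J n = J k / J n - 2 + Jn1 / J n"
      "(J n - Jn1)/J n = 1 - Jn1 / J n"
      using J_nz[of n] by (simp_all add: diff_divide_distrib add_divide_distrib)
    have g: "(J k - J n)/J n = 1/(2*real k+1)" "(J k - 2 * J n + Jn1)/J n = (3/(2*real k+1))/(2*real k+4)"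
      "(J n - Jn1)/J n = 1/(2*real k+4)"
      unfolding d f1 f2 using nz by (simp_all add: field_simps)
    have b1: "(2*real k+4) * ((3/(2*real k+1))/(2*real k+4)) = 3/(2*real k+1)" using mult_div_self[OF nz(3), of "3/(2*real k+1)"] .
    have b2: "(2*real k+4) * (1/(2*real k+4)) = 1" using nz by (simp add: field_simps)
    have b3: "(2*real k+1) * (1/(2*real k+1) + 3/(2*real k+1)) = 4" using nz by (simp add: field_simps)
    show ?thesis unfolding g mk b1 b2 b3 by simp
  qed
  also have "\<dots> \<le> 6 * pi^2 * (E * m)"
  proof -
    have "real n * 2 \<le> m" unfolding mk Suc by simp
    from mult_left_mono[OF this, of "6*pi^2*E"] E0 show ?thesis by (simp add: algebra_simps)
  qed
  also have "E * m = (2*real n+2) powr (1 - r/2)"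
  proof -
    have x: "(-1/2)*(r-2) = 1 - r/2" by (simp add: field_simps)
    have "E * m = e powr (r-2)" using er by simp
    also have "\<dots> = (2*real n+2) powr (1 - r/2)" unfolding e_def powr_powr x m_def by simp
    finally show ?thesis .
  qed
  finally show ?thesis .
qed

inductive_set Tr :: "(real \<times> real \<Rightarrow> real) set" where
  Tc: "(\<lambda>z. c) \<in> Tr"
| Tcos1: "(\<lambda>z. cos (a * fst z + b)) \<in> Tr"
| Tsin1: "(\<lambda>z. sin (a * fst z + b)) \<in> Tr"
| Tcos2: "(\<lambda>z. cos (a * snd z + b)) \<in> Tr"
| Tsin2: "(\<lambda>z. sin (a * snd z + b)) \<in> Tr"
| Tadd: "f \<in> Tr \<Longrightarrow> g \<in> Tr \<Longrightarrow> (\<lambda>z. f z + g z) \<in> Tr"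
| Tmul: "f \<in> Tr \<Longrightarrow> g \<in> Tr \<Longrightarrow> (\<lambda>z. f z * g z) \<in> Tr"

lemma Tr_cont: "f \<in> Tr \<Longrightarrow> continuous_on UNIV f"
  by (induct rule: Tr.induct) (auto intro!: continuous_intros)

lemma Tr_d1: "f \<in> Tr \<Longrightarrow> \<exists>f'\<in>Tr. \<forall>x. ((\<lambda>t. f (t, snd x)) has_real_derivative f' x) (at (fst x))"
proof (induct rule: Tr.induct)
  case (Tc c)
  show ?case by (rule bexI[of _ "\<lambda>z. 0"]) (auto intro: Tr.Tc)
next
  case (Tcos1 a b)
  have m: "(\<lambda>z. - (a * sin (a * fst z + b))) \<in> Tr" using Tr.Tmul[OF Tr.Tc[of "-a"] Tr.Tsin1[of a b]] by simp
  show ?case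
    by (rule bexI[of _ "\<lambda>z. - (a * sin (a * fst z + b))"]) (auto intro!: derivative_eq_intros m)
next
  case (Tsin1 a b)
  show ?case
    by (rule bexI[of _ "\<lambda>z. a * cos (a * fst z + b)"])
       (auto intro!: derivative_eq_intros Tr.Tmul[OF Tr.Tc Tr.Tcos1])
next
  case (Tcos2 a b)
  show ?case by (rule bexI[of _ "\<lambda>z. 0"]) (auto intro: Tr.Tc)
next
  case (Tsin2 a b)
  show ?case by (rule bexI[of _ "\<lambda>z. 0"]) (auto intro: Tr.Tc)
next
  case (Tadd f g)
  then obtain f' g' where f': "f' \<in> Tr" "\<And>x. ((\<lambda>t. f (t, snd x)) has_real_derivative f' x) (at (fst x))"
    and g': "g' \<in> Tr" "\<And>x. ((\<lambda>t. g (t, snd x)) has_real_derivative g' x) (at (fst x))" by blast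
  have d: "((\<lambda>t. f (t, snd x) + g (t, snd x)) has_real_derivative f' x + g' x) (at (fst x))" for x
    using DERIV_add[OF f'(2)[of x] g'(2)[of x]] by simp
  show ?case
    by (rule bexI[of _ "\<lambda>z. f' z + g' z"]) (use d Tr.Tadd[OF f'(1) g'(1)] in auto)
next
  case (Tmul f g)
  then obtain f' g' where f': "f' \<in> Tr" "\<And>x. ((\<lambda>t. f (t, snd x)) has_real_derivative f' x) (at (fst x))"
    and g': "g' \<in> Tr" "\<And>x. ((\<lambda>t. g (t, snd x)) has_real_derivative g' x) (at (fst x))" by blast
  have d: "((\<lambda>t. f (t, snd x) * g (t, snd x)) has_real_derivative f' x * g x + g' x * f x) (at (fst x))" for x
    using DERIV_mult[OF f'(2)[of x] g'(2)[of x]] by simp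
  show ?case
    by (rule bexI[of _ "\<lambda>z. f' z * g z + g' z * f z"])
       (use d Tr.Tadd[OF Tr.Tmul[OF f'(1) Tmul(3)] Tr.Tmul[OF g'(1) Tmul(1)]] in auto)
qed

lemma Tr_d2: "f \<in> Tr \<Longrightarrow> \<exists>f'\<in>Tr. \<forall>x. ((\<lambda>t. f (fst x, t)) has_real_derivative f' x) (at (snd x))"
proof (induct rule: Tr.induct)
  case (Tc c)
  show ?case by (rule bexI[of _ "\<lambda>z. 0"]) (auto intro: Tr.Tc)
next
  case (Tcos2 a b)
  have m: "(\<lambda>z. - (a * sin (a * snd z + b))) \<in> Tr" using Tr.Tmul[OF Tr.Tc[of "-a"] Tr.Tsin2[of a b]] by simp
  show ?case
    by (rule bexI[of _ "\<lambda>z. - (a * sin (a * snd z + b))"]) (auto intro!: derivative_eq_intros m)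
next
  case (Tsin2 a b)
  show ?case
    by (rule bexI[of _ "\<lambda>z. a * cos (a * snd z + b)"])
       (auto intro!: derivative_eq_intros Tr.Tmul[OF Tr.Tc Tr.Tcos2])
next
  case (Tcos1 a b)
  show ?case by (rule bexI[of _ "\<lambda>z. 0"]) (auto intro: Tr.Tc)
next
  case (Tsin1 a b)
  show ?case by (rule bexI[of _ "\<lambda>z. 0"]) (auto intro: Tr.Tc)
next
  case (Tadd f g)
  then obtain f' g' where f': "f' \<in> Tr" "\<And>x. ((\<lambda>t. f (fst x, t)) has_real_derivative f' x) (at (snd x))"
    and g': "g' \<in> Tr" "\<And>x. ((\<lambda>t. g (fst x, t)) has_real_derivative g' x) (at (snd x))" by blast
  have d: "((\<lambda>t. f (fst x, t) + g (fst x, t)) has_real_derivative f' x + g' x) (at (snd x))" for x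
    using DERIV_add[OF f'(2)[of x] g'(2)[of x]] by simp
  show ?case
    by (rule bexI[of _ "\<lambda>z. f' z + g' z"]) (use d Tr.Tadd[OF f'(1) g'(1)] in auto)
next
  case (Tmul f g)
  then obtain f' g' where f': "f' \<in> Tr" "\<And>x. ((\<lambda>t. f (fst x, t)) has_real_derivative f' x) (at (snd x))"
    and g': "g' \<in> Tr" "\<And>x. ((\<lambda>t. g (fst x, t)) has_real_derivative g' x) (at (snd x))" by blast
  have d: "((\<lambda>t. f (fst x, t) * g (fst x, t)) has_real_derivative f' x * g x + g' x * f x) (at (snd x))" for x
    using DERIV_mult[OF f'(2)[of x] g'(2)[of x]] by simp
  show ?case
    by (rule bexI[of _ "\<lambda>z. f' z * g z + g' z * f z"])
       (use d Tr.Tadd[OF Tr.Tmul[OF f'(1) Tmul(3)] Tr.Tmul[OF g'(1) Tmul(1)]] in auto)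
qed

lemma Tr_part1: "f \<in> Tr \<Longrightarrow> has_part1 f \<and> part1 f \<in> Tr"
proof -
  assume "f \<in> Tr"
  from Tr_d1[OF this] obtain f' where f': "f' \<in> Tr" "\<And>x. ((\<lambda>t. f (t, snd x)) has_real_derivative f' x) (at (fst x))" by blast
  have "part1 f = f'" unfolding part1_def[abs_def] using f'(2) by (auto intro!: DERIV_imp_deriv)
  moreover have "has_part1 f" unfolding has_part1_def using f'(2) real_differentiable_def by blast
  ultimately show ?thesis using f'(1) by simp
qed

lemma Tr_part2: "f \<in> Tr \<Longrightarrow> has_part2 f \<and> part2 f \<in> Tr"
proof -
  assume "f \<in> Tr"
  from Tr_d2[OF this] obtain f' where f': "f' \<in> Tr" "\<And>x. ((\<lambda>t. f (fst x, t)) has_real_derivative f' x) (at (snd x))" by blast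
  have "part2 f = f'" unfolding part2_def[abs_def] using f'(2) by (auto intro!: DERIV_imp_deriv)
  moreover have "has_part2 f" unfolding has_part2_def using f'(2) real_differentiable_def by blast
  ultimately show ?thesis using f'(1) by simp
qed

lemma Tr_smooth: "f \<in> Tr \<Longrightarrow> smooth2 f"
  unfolding smooth2_def using Tr_cont Tr_part1 Tr_part2 by blast

lemma Tr_pow: "f \<in> Tr \<Longrightarrow> (\<lambda>z. f z ^ k) \<in> Tr"
proof (induct k)
  case 0 then show ?case using Tr.Tc[of 1] by simp
next
  case (Suc k)
  then show ?case using Tr.Tmul[OF Suc(2) Suc(1)[OF Suc(2)]] by simp
qed

lemma kc1_Tr: "(\<lambda>z. kc n (fst z - s)) \<in> Tr"
proof -
  have A: "(\<lambda>z. (\<lambda>z. 1 / J n) z * (\<lambda>z. cos (pi * fst z + (- pi * s)) ^ (2*n)) z) \<in> Tr"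
    by (intro Tr.Tmul Tr.Tc Tr_pow Tr.Tcos1)
  have e: "(\<lambda>z. (\<lambda>z. 1 / J n) z * (\<lambda>z. cos (pi * fst z + (- pi * s)) ^ (2*n)) z) = (\<lambda>z. kc n (fst z - s))"
    by (auto simp: kc_def algebra_simps)
  show ?thesis using A unfolding e .
qed

lemma kc2_Tr: "(\<lambda>z. kc n (snd z - s)) \<in> Tr"
proof -
  have A: "(\<lambda>z. (\<lambda>z. 1 / J n) z * (\<lambda>z. cos (pi * snd z + (- pi * s)) ^ (2*n)) z) \<in> Tr"
    by (intro Tr.Tmul Tr.Tc Tr_pow Tr.Tcos2)
  have e: "(\<lambda>z. (\<lambda>z. 1 / J n) z * (\<lambda>z. cos (pi * snd z + (- pi * s)) ^ (2*n)) z) = (\<lambda>z. kc n (snd z - s))"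
    by (auto simp: kc_def algebra_simps)
  show ?thesis using A unfolding e .
qed

definition phi :: "nat \<Rightarrow> nat \<Rightarrow> real \<times> real \<Rightarrow> real \<times> real \<Rightarrow> real" where
  "phi n1 n2 x = (\<lambda>z. kc n1 (fst z - fst x) * kc n2 (snd z - snd x))"

lemma phi_smooth: "smooth2 (phi n1 n2 x)"
  unfolding phi_def by (intro Tr_smooth Tr.Tmul kc1_Tr kc2_Tr)

lemma kc_per': "kc n (a + 1 - s) = kc n (a - s)"
  using kc_per[of n "a - s"] by (simp add: algebra_simps)

lemma phi_periodic: "periodic2 (phi n1 n2 x)"
  unfolding periodic2_def phi_def by (simp add: kc_per')

lemma phi_part1: "part1 (phi n1 n2 x) = (\<lambda>z. kd n1 (fst z - fst x) * kc n2 (snd z - snd x))"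
proof -
  have "((\<lambda>t. kc n1 (t - fst x) * kc n2 (snd y - snd x)) has_real_derivative kd n1 (fst y - fst x) * kc n2 (snd y - snd x)) (at (fst y))" for y
    by (intro DERIV_cmult_right shift_deriv kc_deriv)
  then show ?thesis unfolding part1_def[abs_def] phi_def by (auto intro!: DERIV_imp_deriv)
qed

lemma phi_part2: "part2 (phi n1 n2 x) = (\<lambda>z. kc n1 (fst z - fst x) * kd n2 (snd z - snd x))"
proof -
  have "((\<lambda>t. kc n1 (fst y - fst x) * kc n2 (t - snd x)) has_real_derivative kc n1 (fst y - fst x) * kd n2 (snd y - snd x)) (at (snd y))" for y
    by (intro DERIV_cmult shift_deriv kc_deriv)
  then show ?thesis unfolding part2_def[abs_def] phi_def by (auto intro!: DERIV_imp_deriv)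
qed

lemma phi_part11: "part1 (part1 (phi n1 n2 x)) = (\<lambda>z. kdd n1 (fst z - fst x) * kc n2 (snd z - snd x))"
proof -
  have "((\<lambda>t. kd n1 (t - fst x) * kc n2 (snd y - snd x)) has_real_derivative kdd n1 (fst y - fst x) * kc n2 (snd y - snd x)) (at (fst y))" for y
    by (intro DERIV_cmult_right shift_deriv kd_deriv)
  then show ?thesis unfolding phi_part1 unfolding part1_def[abs_def] by (auto intro!: DERIV_imp_deriv)
qed

lemma int_sep:
  fixes p q :: "real \<Rightarrow> real"
  assumes "continuous_on UNIV p" "continuous_on UNIV q"
  shows "integral unitsq (\<lambda>z. p (fst z) * q (snd z)) = integral {0..1} p * integral {0..1} q"
proof -
  have c: "continuous_on (cbox (0,0) (1,1)) (\<lambda>z::real\<times>real. p (fst z) * q (snd z))"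
    by (intro continuous_on_mult continuous_on_compose2[OF assms(1)] continuous_on_compose2[OF assms(2)]
        continuous_intros) auto
  have "integral unitsq (\<lambda>z. p (fst z) * q (snd z)) = integral (cbox 0 1) (\<lambda>x. integral (cbox 0 1) (\<lambda>y. p x * q y))"
    using integral_prod_continuous[OF c] by simp
  also have "\<dots> = integral (cbox 0 1) (\<lambda>x. p x * integral (cbox 0 1) q)" by simp
  also have "\<dots> = integral (cbox 0 1) p * integral (cbox 0 1) q" by simp
  finally show ?thesis by (simp add: cbox_interval)
qed

lemma int_bound:
  fixes F G :: "real \<times> real \<Rightarrow> real"
  assumes "continuous_on UNIV F" "continuous_on UNIV G" "\<And>z. \<bar>F z\<bar> \<le> G z"
  shows "\<bar>integral unitsq F\<bar> \<le> integral unitsq G"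
proof -
  have "norm (integral unitsq F) \<le> integral unitsq G"
    by (rule integral_norm_bound_integral)
       (auto intro!: integrable_continuous continuous_on_subset[OF assms(1)] continuous_on_subset[OF assms(2)] assms(3))
  then show ?thesis by simp
qed

lemma sin_cubic: fixes x :: real shows "\<bar>sin x - x\<bar> \<le> \<bar>x\<bar>^3 / 6"
proof -
  have "\<bar>sin x - (\<Sum>m<3. sin_coeff m * x ^ m)\<bar> \<le> inverse (fact 3) * \<bar>x\<bar> ^ 3"
    by (rule Maclaurin_sin_bound)
  moreover have "(\<Sum>m<3. sin_coeff m * x ^ m) = x"
    by (simp add: numeral_3_eq_3 sin_coeff_def)
  moreover have "inverse (fact 3 :: real) = 1/6" by (simp add: numeral_3_eq_3)
  ultimately show ?thesis by simp
qed

lemma per_int: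
  fixes g :: "real \<Rightarrow> 'a"
  assumes "\<And>v. g (v + 1) = g v"
  shows "g (v + of_int m) = g v"
proof -
  have pos: "g (w + real k) = g w" for w k
  proof (induct k)
    case 0 then show ?case by simp
  next
    case (Suc k)
    have "g (w + real (Suc k)) = g ((w + real k) + 1)" by (simp add: algebra_simps)
    also have "\<dots> = g w" using assms Suc by simp
    finally show ?case .
  qed
  show ?thesis
  proof (cases "m \<ge> 0")
    case True
    then obtain k where "m = int k" using nonneg_int_cases by blast
    then show ?thesis using pos by simp
  next
    case False
    then have "-m \<ge> 0" by simp
    then obtain k where "-m = int k" using nonneg_int_cases by blast
    then have k: "m = - int k" by simp
    have "g (v + of_int m) = g ((v + of_int m) + real k)" using pos by simp
    also have "(v + of_int m) + real k = v" using k by simp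
    finally show ?thesis .
  qed
qed

lemma sgw_per: "sgw (v + 1) = sgw v"
proof -
  have "pi * (v+1) = pi * v + pi" by (simp add: algebra_simps)
  then show ?thesis by (simp add: sgw_def)
qed

lemma sw_per: "sw (v + 1) = sw v"
proof -
  have "2 * pi * (v+1) = 2 * pi * v + 2 * pi" by (simp add: algebra_simps)
  then show ?thesis by (simp add: sw_def)
qed

lemma abs_le_sgw:
  assumes "\<bar>u\<bar> \<le> 1/2"
  shows "\<bar>u\<bar> \<le> sgw u"
proof -
  define x where "x = pi * u"
  have ax: "\<bar>x\<bar> = pi * \<bar>u\<bar>" unfolding x_def by (simp add: abs_mult)
  have x2: "\<bar>x\<bar> \<le> 2"
  proof -
    have "pi * \<bar>u\<bar> \<le> 4 * (1/2)" using assms pi_less_4 by (intro mult_mono) auto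
    then show ?thesis unfolding ax by simp
  qed
  have "\<bar>x\<bar>^3 / 6 = \<bar>x\<bar> * (\<bar>x\<bar>^2 / 6)" by (simp add: power3_eq_cube power2_eq_square)
  also have "\<dots> \<le> \<bar>x\<bar> * (4/6)"
  proof -
    have "\<bar>x\<bar>^2 \<le> 2^2" using x2 by (intro power_mono) auto
    then show ?thesis by (intro mult_left_mono) auto
  qed
  finally have "\<bar>x\<bar>^3 / 6 \<le> \<bar>x\<bar> * (4/6)" .
  with sin_cubic[of x] have "\<bar>x\<bar> - \<bar>x\<bar> * (4/6) \<le> \<bar>sin x\<bar>" by linarith
  then have "\<bar>x\<bar> / 3 \<le> \<bar>sin x\<bar>" by simp
  moreover have "\<bar>u\<bar> \<le> \<bar>x\<bar> / 3"
  proof -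
    have "3 * \<bar>u\<bar> \<le> pi * \<bar>u\<bar>" using pi_gt3 by (intro mult_right_mono) auto
    then show ?thesis unfolding ax by simp
  qed
  ultimately show ?thesis unfolding sgw_def x_def by linarith
qed

lemma sw_close:
  assumes "\<bar>u\<bar> \<le> 1"
  shows "\<bar>u - sw u\<bar> \<le> 11 * \<bar>u\<bar>^3"
proof -
  define y where "y = 2 * pi * u"
  have "\<bar>sin y - y\<bar> \<le> \<bar>y\<bar>^3 / 6" by (rule sin_cubic)
  then have "\<bar>sin y - y\<bar> / (2*pi) \<le> \<bar>y\<bar>^3 / 6 / (2*pi)" by (rule divide_right_mono) simp
  moreover have "\<bar>u - sw u\<bar> = \<bar>sin y - y\<bar> / (2*pi)" unfolding sw_def y_def by (simp add: field_simps)
  moreover have "\<bar>y\<bar>^3 / 6 / (2*pi) = (2*pi^2/3) * \<bar>u\<bar>^3"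
  proof -
    have "\<bar>y\<bar> = 2*pi*\<bar>u\<bar>" unfolding y_def by (simp add: abs_mult)
    then have "\<bar>y\<bar>^3 = 8*pi^3*\<bar>u\<bar>^3" by (simp add: power_mult_distrib)
    then show ?thesis by (simp add: power3_eq_cube power2_eq_square)
  qed
  moreover have "(2*pi^2/3) * \<bar>u\<bar>^3 \<le> 11 * \<bar>u\<bar>^3"
  proof -
    have "pi^2 \<le> 4^2" using pi_less_4 by (intro power_mono) auto
    then have "2*pi^2/3 \<le> 11" by simp
    then show ?thesis by (intro mult_right_mono) auto
  qed
  ultimately show ?thesis by linarith
qed

lemma powr_sum_le:
  fixes a b t :: real
  assumes "0 \<le> a" "0 \<le> b" "0 < t"
  shows "(a + b) powr t \<le> 2 powr t * (a powr t + b powr t)"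
proof -
  have "(a + b) powr t \<le> (2 * max a b) powr t" by (rule powr_mono2) (use assms in auto)
  also have "\<dots> = 2 powr t * max a b powr t" using assms by (simp add: powr_mult)
  also have "max a b powr t \<le> a powr t + b powr t" by (simp add: max_def)
  then have "2 powr t * max a b powr t \<le> 2 powr t * (a powr t + b powr t)" by (intro mult_left_mono) auto
  finally show ?thesis .
qed

lemma two_powr_le3: "t \<le> 3/2 \<Longrightarrow> 2 powr t \<le> (3::real)"
proof -
  assume "t \<le> 3/2"
  then have "2 powr t \<le> 2 powr (3/2::real)" by (intro powr_mono) auto
  also have "2 powr (3/2::real) = sqrt 8"
  proof -
    have "(2::real) powr (3/2) = (2 powr 3) powr (1/2)" by (subst powr_powr) simp
    also have "(2::real) powr 3 = 8" by (simp add: powr_numeral)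
    also have "(8::real) powr (1/2) = sqrt 8" by (simp add: powr_half_sqrt)
    finally show ?thesis .
  qed
  also have "sqrt 8 \<le> (3::real)" by (rule real_le_lsqrt) auto
  finally show ?thesis .
qed

lemma quot_nonneg: "0 \<le> holder_quot \<theta> f x y"
  unfolding holder_quot_def by simp

lemma pow3_le_powr:
  fixes t th :: real
  assumes "0 \<le> t" "t \<le> 1" "th \<le> 3"
  shows "t^3 \<le> t powr th"
proof (cases "t = 0")
  case True then show ?thesis by simp
next
  case False
  then have "t^3 = t powr 3" using assms by (simp add: powr_realpow)
  also have "\<dots> \<le> t powr th" by (rule powr_mono') (use assms in auto)
  finally show ?thesis .
qed

lemma per1: "periodic2 f \<Longrightarrow> f (a + of_int m, b) = f (a, b)"
  using per_int[of "\<lambda>a. f (a, b)"] unfolding periodic2_def by blast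

lemma per2: "periodic2 f \<Longrightarrow> f (a, b + of_int m) = f (a, b)"
  using per_int[of "\<lambda>b. f (a, b)"] unfolding periodic2_def by blast

lemma D_bound:
  assumes per: "periodic2 f" and hq: "\<And>x y. x \<noteq> y \<Longrightarrow> holder_quot \<theta> f x y \<le> A" and th: "1 < \<theta>"
  shows "\<bar>part1 f x\<bar> \<le> A"
proof -
  define y where "y = (fst x + 1, snd x)"
  have "x \<noteq> y" unfolding y_def by (metis add_cancel_right_right fst_conv zero_neq_one)
  then have "holder_quot \<theta> f x y \<le> A" by (rule hq)
  moreover have "dT y x = 1" unfolding y_def dT_def by simp
  moreover have "f y = f x" using per unfolding y_def periodic2_def by simp
  ultimately show ?thesis unfolding holder_quot_def y_def using th by simp
qed

lemma hold_key:
  fixes f :: "real \<times> real \<Rightarrow> real"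
  assumes per: "periodic2 f" and hq: "\<And>x y. x \<noteq> y \<Longrightarrow> holder_quot \<theta> f x y \<le> A"
    and th: "0 < \<theta>" "\<theta> < 3/2"
  shows "\<bar>f z - f x - (if \<theta> \<le> 1 then 0 else part1 f x) * sw (fst z - fst x)\<bar>
     \<le> A * 14 * (sgw (fst z - fst x) powr \<theta> + sgw (snd z - snd x) powr (2*\<theta>/3))"
proof -
  have A0: "0 \<le> A" using hq[of "(0,0)" "(1,0)"] quot_nonneg[of \<theta> f "(0,0)" "(1,0)"] by simp
  define D where "D = (if \<theta> \<le> 1 then 0 else part1 f x)"
  define m1 where "m1 = round (fst z - fst x)"
  define m2 where "m2 = round (snd z - snd x)"
  define u1 where "u1 = fst z - fst x - of_int m1"
  define u2 where "u2 = snd z - snd x - of_int m2"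
  have u1h: "\<bar>u1\<bar> \<le> 1/2" unfolding u1_def m1_def using of_int_round_abs_le[of "fst z - fst x"] by linarith
  have u2h: "\<bar>u2\<bar> \<le> 1/2" unfolding u2_def m2_def using of_int_round_abs_le[of "snd z - snd x"] by linarith
  define z' where "z' = (fst x + u1, snd x + u2)"
  have fz: "f z = f z'"
  proof -
    have "f z = f ((fst x + u1) + of_int m1, (snd x + u2) + of_int m2)" unfolding u1_def u2_def by simp
    also have "\<dots> = f (fst x + u1, (snd x + u2) + of_int m2)" by (rule per1[OF per])
    also have "\<dots> = f z'" unfolding z'_def by (rule per2[OF per])
    finally show ?thesis .
  qed
  have sg1: "sgw (fst z - fst x) = sgw u1" using per_int[of sgw u1 m1, OF sgw_per] unfolding u1_def by simp
  have sg2: "sgw (snd z - snd x) = sgw u2" using per_int[of sgw u2 m2, OF sgw_per] unfolding u2_def by simp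
  have sw1: "sw (fst z - fst x) = sw u1" using per_int[of sw u1 m1, OF sw_per] unfolding u1_def by simp
  define S where "S = sgw u1 powr \<theta> + sgw u2 powr (2*\<theta>/3)"
  have S0: "0 \<le> S" unfolding S_def by simp
  have a1: "\<bar>u1\<bar> powr \<theta> \<le> sgw u1 powr \<theta>" by (rule powr_mono2) (use th abs_le_sgw[OF u1h] in auto)
  have a2: "\<bar>u2\<bar> powr (2*\<theta>/3) \<le> sgw u2 powr (2*\<theta>/3)" by (rule powr_mono2) (use th abs_le_sgw[OF u2h] in auto)
  have N: "\<bar>f z' - f x - D * u1\<bar> \<le> A * 3 * S"
  proof (cases "z' = x")
    case True
    then have "u1 = 0" "u2 = 0" unfolding z'_def by (auto simp: prod_eq_iff)
    then show ?thesis using True A0 S0 by simp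
  next
    case False
    have q: "holder_quot \<theta> f x z' \<le> A" using hq False by metis
    define d where "d = dT z' x"
    have dd: "d = \<bar>u1\<bar> + \<bar>u2\<bar> powr (2/3)" unfolding d_def dT_def z'_def by simp
    have d0: "0 < d"
    proof -
      have "u1 \<noteq> 0 \<or> u2 \<noteq> 0" using False unfolding z'_def by (auto simp: prod_eq_iff)
      then show ?thesis unfolding dd by (auto simp: add_pos_nonneg add_nonneg_pos)
    qed
    have num: "(if \<theta> \<le> 1 then \<bar>f z' - f x\<bar> else \<bar>f z' - f x - part1 f x * (fst z' - fst x)\<bar>) = \<bar>f z' - f x - D * u1\<bar>"
      unfolding D_def z'_def by simp
    have "\<bar>f z' - f x - D * u1\<bar> / d powr \<theta> \<le> A" using q unfolding holder_quot_def num d_def .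
    then have "\<bar>f z' - f x - D * u1\<bar> \<le> A * d powr \<theta>" using d0 by (simp add: divide_le_eq)
    also have "d powr \<theta> \<le> 2 powr \<theta> * (\<bar>u1\<bar> powr \<theta> + (\<bar>u2\<bar> powr (2/3)) powr \<theta>)"
      unfolding dd by (rule powr_sum_le) (use th in auto)
    also have "(\<bar>u2\<bar> powr (2/3)) powr \<theta> = \<bar>u2\<bar> powr (2*\<theta>/3)" by (simp add: powr_powr)
    also have "2 powr \<theta> * (\<bar>u1\<bar> powr \<theta> + \<bar>u2\<bar> powr (2*\<theta>/3)) \<le> 3 * S"
      unfolding S_def using two_powr_le3[of \<theta>] th a1 a2 by (intro mult_mono) auto
    finally show ?thesis using A0 by (simp add: mult_left_mono mult.assoc)
  qed
  have "\<bar>f z - f x - D * sw (fst z - fst x)\<bar> \<le> A * 14 * S"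
  proof (cases "\<theta> \<le> 1")
    case True
    then have "D = 0" unfolding D_def by simp
    then show ?thesis using N fz A0 S0 by (simp add: mult_right_mono)
  next
    case False
    have Db: "\<bar>D\<bar> \<le> A" unfolding D_def using False D_bound[OF per hq] by simp
    have "\<bar>u1 - sw u1\<bar> \<le> 11 * \<bar>u1\<bar>^3" by (rule sw_close) (use u1h in auto)
    also have "\<bar>u1\<bar>^3 \<le> \<bar>u1\<bar> powr \<theta>" by (rule pow3_le_powr) (use u1h th in auto)
    also have "\<dots> \<le> S" unfolding S_def using a1 powr_ge_zero[of "sgw u2" "2*\<theta>/3"] by linarith
    finally have c: "\<bar>u1 - sw u1\<bar> \<le> 11 * S" by simp
    have "\<bar>f z - f x - D * sw (fst z - fst x)\<bar> = \<bar>(f z' - f x - D * u1) + D * (u1 - sw u1)\<bar>"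
      unfolding fz sw1 by (simp add: algebra_simps)
    also have "\<dots> \<le> \<bar>f z' - f x - D * u1\<bar> + \<bar>D\<bar> * \<bar>u1 - sw u1\<bar>" by (simp add: abs_mult[symmetric] abs_triangle_ineq)
    also have "\<bar>D\<bar> * \<bar>u1 - sw u1\<bar> \<le> A * (11 * S)" by (rule mult_mono[OF Db c]) (use A0 in auto)
    finally show ?thesis using N by simp
  qed
  then show ?thesis unfolding D_def S_def sg1 sg2 by simp
qed

lemma hold_cont:
  fixes f :: "real \<times> real \<Rightarrow> real"
  assumes per: "periodic2 f" and hq: "\<And>x y. x \<noteq> y \<Longrightarrow> holder_quot \<theta> f x y \<le> A"
    and th: "0 < \<theta>" "\<theta> < 3/2"
  shows "continuous_on UNIV f"
proof (rule continuous_at_imp_continuous_on, intro ballI)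
  fix x :: "real \<times> real"
  define D where "D = (if \<theta> \<le> 1 then 0 else part1 f x)"
  define G where "G z = \<bar>D\<bar> * \<bar>sw (fst z - fst x)\<bar> + A * 14 * (sgw (fst z - fst x) powr \<theta> + sgw (snd z - snd x) powr (2*\<theta>/3))" for z
  have b: "norm (f z - f x) \<le> G z" for z
  proof -
    have "\<bar>f z - f x - D * sw (fst z - fst x)\<bar> \<le> A * 14 * (sgw (fst z - fst x) powr \<theta> + sgw (snd z - snd x) powr (2*\<theta>/3))"
      unfolding D_def by (rule hold_key[OF per hq th])
    moreover have "\<bar>f z - f x\<bar> \<le> \<bar>f z - f x - D * sw (fst z - fst x)\<bar> + \<bar>D * sw (fst z - fst x)\<bar>" by arith
    ultimately show ?thesis unfolding G_def by (simp add: abs_mult)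
  qed
  have cG: "continuous_on UNIV G" unfolding G_def
    using th by (intro continuous_intros continuous_on_compose2[OF cont_sw] continuous_on_powr'
      continuous_on_compose2[OF cont_sgw]) (auto simp: sgw_def)
  have "G x = 0" unfolding G_def using th by (simp add: sw_def sgw_def)
  then have "(G \<longlongrightarrow> 0) (at x)" using cG by (metis continuous_on_def UNIV_I at_within_open open_UNIV)
  then have "((\<lambda>z. f z - f x) \<longlongrightarrow> 0) (at x)"
    by (rule Lim_null_comparison[rotated]) (use b in \<open>auto intro: always_eventually\<close>)
  then show "isCont f x" by (simp add: isCont_def LIM_zero_iff)
qed

lemma int_c: "continuous_on UNIV (F::real\<times>real\<Rightarrow>real) \<Longrightarrow> F integrable_on unitsq"
  by (rule integrable_continuous) (auto intro: continuous_on_subset)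

lemma int_c1: "continuous_on UNIV (F::real\<Rightarrow>real) \<Longrightarrow> F integrable_on {0..1}"
  by (rule integrable_continuous_interval) (auto intro: continuous_on_subset)

lemma cfst: "continuous_on UNIV (p::real\<Rightarrow>real) \<Longrightarrow> continuous_on UNIV (\<lambda>z::real\<times>real. p (fst z))"
  by (rule continuous_on_compose2[of UNIV p]) (auto intro!: continuous_intros)

lemma csnd: "continuous_on UNIV (p::real\<Rightarrow>real) \<Longrightarrow> continuous_on UNIV (\<lambda>z::real\<times>real. p (snd z))"
  by (rule continuous_on_compose2[of UNIV p]) (auto intro!: continuous_intros)

lemma cshift: "continuous_on UNIV (p::real\<Rightarrow>real) \<Longrightarrow> continuous_on UNIV (\<lambda>v. p (v - s))"
  by (rule continuous_on_compose2[of UNIV p]) (auto intro!: continuous_intros)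

lemma cslice1: "continuous_on UNIV (G::real\<times>real\<Rightarrow>real) \<Longrightarrow> continuous_on UNIV (\<lambda>w. G (a, w))"
  by (rule continuous_on_compose2[of UNIV G]) (auto intro!: continuous_intros)

lemma cslice2: "continuous_on UNIV (G::real\<times>real\<Rightarrow>real) \<Longrightarrow> continuous_on UNIV (\<lambda>w. G (w, a))"
  by (rule continuous_on_compose2[of UNIV G]) (auto intro!: continuous_intros)

lemma cslice1z: "continuous_on UNIV (G::real\<times>real\<Rightarrow>real) \<Longrightarrow> continuous_on UNIV (\<lambda>z::real\<times>real. G (a, snd z))"
  by (rule continuous_on_compose2[of UNIV G]) (auto intro!: continuous_intros)

lemma cslice2z: "continuous_on UNIV (G::real\<times>real\<Rightarrow>real) \<Longrightarrow> continuous_on UNIV (\<lambda>z::real\<times>real. G (fst z, a))"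
  by (rule continuous_on_compose2[of UNIV G]) (auto intro!: continuous_intros)

lemma term_x1:
  fixes G :: "real \<times> real \<Rightarrow> real" and P Q W :: "real \<Rightarrow> real"
  assumes cG: "continuous_on UNIV G" and cP: "continuous_on UNIV P" and cQ: "continuous_on UNIV Q"
    and cW: "continuous_on UNIV W"
    and hG: "\<And>z. \<bar>G z - G (a, snd z)\<bar> \<le> B * W (fst z)"
    and W0: "\<And>v. 0 \<le> W v" and B0: "0 \<le> B"
    and P0: "integral {0..1} P = 0" and Q0: "\<And>v. 0 \<le> Q v" and Q1: "integral {0..1} Q = 1"
    and M: "integral {0..1} (\<lambda>v. W v * \<bar>P v\<bar>) \<le> M"
  shows "\<bar>integral unitsq (\<lambda>z. G z * (P (fst z) * Q (snd z)))\<bar> \<le> B * M"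
proof -
  have cP1: "continuous_on UNIV (\<lambda>z::real\<times>real. P (fst z))" by (rule cfst[OF cP])
  have cQ1: "continuous_on UNIV (\<lambda>z::real\<times>real. Q (snd z))" by (rule csnd[OF cQ])
  have cW1: "continuous_on UNIV (\<lambda>z::real\<times>real. W (fst z))" by (rule cfst[OF cW])
  have cGa: "continuous_on UNIV (\<lambda>z::real\<times>real. G (a, snd z))" by (rule cslice1z[OF cG])
  define F1 where "F1 z = (G z - G (a, snd z)) * (P (fst z) * Q (snd z))" for z
  define F2 where "F2 z = G (a, snd z) * (P (fst z) * Q (snd z))" for z
  have cF1: "continuous_on UNIV F1" unfolding F1_def[abs_def] by (intro continuous_intros cG cP1 cQ1 cGa)
  have cF2: "continuous_on UNIV F2" unfolding F2_def[abs_def] by (intro continuous_intros cG cP1 cQ1 cGa)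
  have split: "integral unitsq (\<lambda>z. G z * (P (fst z) * Q (snd z))) = integral unitsq F1 + integral unitsq F2"
  proof -
    have "(\<lambda>z. G z * (P (fst z) * Q (snd z))) = (\<lambda>z. F1 z + F2 z)" unfolding F1_def F2_def by (auto simp: algebra_simps)
    then show ?thesis using integral_add[OF int_c[OF cF1] int_c[OF cF2]] by simp
  qed
  have "integral unitsq F2 = integral unitsq (\<lambda>z. P (fst z) * (\<lambda>w. G (a, w) * Q w) (snd z))"
    unfolding F2_def by (simp add: algebra_simps)
  also have "\<dots> = integral {0..1} P * integral {0..1} (\<lambda>w. G (a, w) * Q w)"
    by (rule int_sep[OF cP]) (intro continuous_intros cslice1[OF cG] cQ)
  finally have F2z: "integral unitsq F2 = 0" using P0 by simp
  have "\<bar>integral unitsq F1\<bar> \<le> integral unitsq (\<lambda>z. B * ((\<lambda>v. W v * \<bar>P v\<bar>) (fst z) * Q (snd z)))"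
  proof (rule int_bound[OF cF1])
    show "continuous_on UNIV (\<lambda>z. B * ((\<lambda>v. W v * \<bar>P v\<bar>) (fst z) * Q (snd z)))"
      by (intro continuous_intros cW1 cP1 cQ1)
    fix z
    have "\<bar>F1 z\<bar> = \<bar>G z - G (a, snd z)\<bar> * (\<bar>P (fst z)\<bar> * Q (snd z))" unfolding F1_def using Q0 by (simp add: abs_mult)
    also have "\<dots> \<le> (B * W (fst z)) * (\<bar>P (fst z)\<bar> * Q (snd z))" by (rule mult_right_mono[OF hG]) (use Q0 in simp)
    finally show "\<bar>F1 z\<bar> \<le> B * ((\<lambda>v. W v * \<bar>P v\<bar>) (fst z) * Q (snd z))" by (simp add: algebra_simps)
  qed
  also have "\<dots> = B * (integral {0..1} (\<lambda>v. W v * \<bar>P v\<bar>) * integral {0..1} Q)"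
    by (subst integral_mult_right, subst int_sep)
       (auto intro: cP cQ continuous_on_mult[OF cW continuous_on_rabs[OF cP]] continuous_on_mult[OF cW continuous_on_rabs[OF cQ]])
  also have "\<dots> \<le> B * M" using M B0 Q1 by (simp add: mult_left_mono)
  finally show ?thesis using split F2z by simp
qed

lemma term_x2:
  fixes G :: "real \<times> real \<Rightarrow> real" and P Q W :: "real \<Rightarrow> real"
  assumes cG: "continuous_on UNIV G" and cP: "continuous_on UNIV P" and cQ: "continuous_on UNIV Q"
    and cW: "continuous_on UNIV W"
    and hG: "\<And>z. \<bar>G z - G (fst z, a)\<bar> \<le> B * W (snd z)"
    and W0: "\<And>v. 0 \<le> W v" and B0: "0 \<le> B"
    and Q0: "integral {0..1} Q = 0" and P0: "\<And>v. 0 \<le> P v" and P1: "integral {0..1} P = 1"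
    and M: "integral {0..1} (\<lambda>v. W v * \<bar>Q v\<bar>) \<le> M"
  shows "\<bar>integral unitsq (\<lambda>z. G z * (P (fst z) * Q (snd z)))\<bar> \<le> B * M"
proof -
  have cP1: "continuous_on UNIV (\<lambda>z::real\<times>real. P (fst z))" by (rule cfst[OF cP])
  have cQ1: "continuous_on UNIV (\<lambda>z::real\<times>real. Q (snd z))" by (rule csnd[OF cQ])
  have cW1: "continuous_on UNIV (\<lambda>z::real\<times>real. W (snd z))" by (rule csnd[OF cW])
  have cGa: "continuous_on UNIV (\<lambda>z::real\<times>real. G (fst z, a))" by (rule cslice2z[OF cG])
  define F1 where "F1 z = (G z - G (fst z, a)) * (P (fst z) * Q (snd z))" for z
  define F2 where "F2 z = G (fst z, a) * (P (fst z) * Q (snd z))" for z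
  have cF1: "continuous_on UNIV F1" unfolding F1_def[abs_def] by (intro continuous_intros cG cP1 cQ1 cGa)
  have cF2: "continuous_on UNIV F2" unfolding F2_def[abs_def] by (intro continuous_intros cG cP1 cQ1 cGa)
  have split: "integral unitsq (\<lambda>z. G z * (P (fst z) * Q (snd z))) = integral unitsq F1 + integral unitsq F2"
  proof -
    have "(\<lambda>z. G z * (P (fst z) * Q (snd z))) = (\<lambda>z. F1 z + F2 z)" unfolding F1_def F2_def by (auto simp: algebra_simps)
    then show ?thesis using integral_add[OF int_c[OF cF1] int_c[OF cF2]] by simp
  qed
  have "integral unitsq F2 = integral unitsq (\<lambda>z. (\<lambda>w. G (w, a) * P w) (fst z) * Q (snd z))"
    unfolding F2_def by (simp add: algebra_simps)
  also have "\<dots> = integral {0..1} (\<lambda>w. G (w, a) * P w) * integral {0..1} Q"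
    by (rule int_sep[OF _ cQ]) (intro continuous_intros cslice2[OF cG] cP)
  finally have F2z: "integral unitsq F2 = 0" using Q0 by simp
  have "\<bar>integral unitsq F1\<bar> \<le> integral unitsq (\<lambda>z. B * (P (fst z) * (\<lambda>v. W v * \<bar>Q v\<bar>) (snd z)))"
  proof (rule int_bound[OF cF1])
    show "continuous_on UNIV (\<lambda>z. B * (P (fst z) * (\<lambda>v. W v * \<bar>Q v\<bar>) (snd z)))"
      by (intro continuous_intros cW1 cP1 cQ1)
    fix z
    have "\<bar>F1 z\<bar> = \<bar>G z - G (fst z, a)\<bar> * (P (fst z) * \<bar>Q (snd z)\<bar>)" unfolding F1_def using P0 by (simp add: abs_mult)
    also have "\<dots> \<le> (B * W (snd z)) * (P (fst z) * \<bar>Q (snd z)\<bar>)" by (rule mult_right_mono[OF hG]) (use P0 in simp)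
    finally show "\<bar>F1 z\<bar> \<le> B * (P (fst z) * (\<lambda>v. W v * \<bar>Q v\<bar>) (snd z))" by (simp add: algebra_simps)
  qed
  also have "\<dots> = B * (integral {0..1} P * integral {0..1} (\<lambda>v. W v * \<bar>Q v\<bar>))"
    by (subst integral_mult_right, subst int_sep)
       (auto intro: cP cQ continuous_on_mult[OF cW continuous_on_rabs[OF cP]] continuous_on_mult[OF cW continuous_on_rabs[OF cQ]])
  also have "\<dots> \<le> B * M" using M B0 P1 by (simp add: mult_left_mono)
  finally show ?thesis using split F2z by simp
qed

lemma cont_kc_s: "continuous_on UNIV (\<lambda>v. kc n (v - s))" by (rule cshift[OF cont_kc])
lemma cont_kd_s: "continuous_on UNIV (\<lambda>v. kd n (v - s))" by (rule cshift[OF cont_kd])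
lemma cont_kdd_s: "continuous_on UNIV (\<lambda>v. kdd n (v - s))" by (rule cshift[OF cont_kdd])
lemma cont_sw_s: "continuous_on UNIV (\<lambda>v. sw (v - s))" by (rule cshift[OF cont_sw])
lemma kc_nonneg: "0 \<le> kc n v" by (simp add: kc_def J_pos less_imp_le power_mult)
lemma int_kc: "integral {0..1} (\<lambda>v. kc n (v - s)) = 1" using I1 by (rule integral_unique)

lemma int_add2:
  fixes F G :: "real \<times> real \<Rightarrow> real"
  assumes "continuous_on UNIV F" "continuous_on UNIV G"
  shows "integral unitsq (\<lambda>z. F z + G z) = integral unitsq F + integral unitsq G"
  by (rule integral_add[OF int_c[OF assms(1)] int_c[OF assms(2)]])

lemma phi_eq: "phi n1 n2 x = (\<lambda>z. (\<lambda>v. kc n1 (v - fst x)) (fst z) * (\<lambda>v. kc n2 (v - snd x)) (snd z))"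
  by (simp add: phi_def)

lemma cont_phi: "continuous_on UNIV (phi n1 n2 x)"
  unfolding phi_eq by (intro continuous_intros cfst csnd cont_kc_s)

lemma int_phi: "integral unitsq (phi n1 n2 x) = 1"
  unfolding phi_eq by (subst int_sep) (auto intro: cont_kc_s simp: int_kc)

lemma E1:
  fixes f :: "real \<times> real \<Rightarrow> real"
  assumes per: "periodic2 f" and hq: "\<And>x y. x \<noteq> y \<Longrightarrow> holder_quot \<alpha> f x y \<le> A"
    and th: "0 < \<alpha>" "\<alpha> < 3/2"
  shows "\<bar>integral unitsq (\<lambda>z. f z * phi n1 n2 x z) - f x\<bar>
     \<le> A * 14 * (2 * (2*real n1+2) powr (-\<alpha>/2) + 2 * (2*real n2+2) powr (-(2*\<alpha>/3)/2))"
proof -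
  have cf: "continuous_on UNIV f" by (rule hold_cont[OF per hq th])
  have A0: "0 \<le> A" using hq[of "(0,0)" "(1,0)"] quot_nonneg[of \<alpha> f "(0,0)" "(1,0)"] by simp
  define p1 where "p1 v = kc n1 (v - fst x)" for v
  define p2 where "p2 v = kc n2 (v - snd x)" for v
  have cp1: "continuous_on UNIV p1" unfolding p1_def[abs_def] by (rule cont_kc_s)
  have cp2: "continuous_on UNIV p2" unfolding p2_def[abs_def] by (rule cont_kc_s)
  have ip1: "integral {0..1} p1 = 1" unfolding p1_def by (rule int_kc)
  have ip2: "integral {0..1} p2 = 1" unfolding p2_def by (rule int_kc)
  have ph: "phi n1 n2 x = (\<lambda>z. p1 (fst z) * p2 (snd z))" unfolding p1_def p2_def phi_def by simp
  define D where "D = (if \<alpha> \<le> 1 then 0 else part1 f x)"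
  define R where "R z = f z - f x - D * sw (fst z - fst x)" for z
  define W1 where "W1 v = sgw (v - fst x) powr \<alpha>" for v
  define W2 where "W2 v = sgw (v - snd x) powr (2*\<alpha>/3)" for v
  have cW1: "continuous_on UNIV W1" unfolding W1_def[abs_def] by (rule cont_sgw_pow) (use th in simp)
  have cW2: "continuous_on UNIV W2" unfolding W2_def[abs_def] by (rule cont_sgw_pow) (use th in simp)
  have hR: "\<bar>R z\<bar> \<le> A * 14 * (W1 (fst z) + W2 (snd z))" for z
    unfolding R_def W1_def W2_def D_def by (rule hold_key[OF per hq th])
  have cR: "continuous_on UNIV R" unfolding R_def[abs_def]
    by (intro continuous_intros cf cfst[OF cont_sw_s])
  have cP1: "continuous_on UNIV (\<lambda>z::real\<times>real. p1 (fst z))" by (rule cfst[OF cp1])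
  have cP2: "continuous_on UNIV (\<lambda>z::real\<times>real. p2 (snd z))" by (rule csnd[OF cp2])
  have cS: "continuous_on UNIV (\<lambda>z::real\<times>real. sw (fst z - fst x))" by (rule cfst[OF cont_sw_s])
  have "(\<lambda>z. f z * phi n1 n2 x z) = (\<lambda>z. (R z * (p1 (fst z) * p2 (snd z)) + f x * (p1 (fst z) * p2 (snd z)))
      + D * (sw (fst z - fst x) * (p1 (fst z) * p2 (snd z))))"
    unfolding ph R_def by (auto simp: algebra_simps)
  then have "integral unitsq (\<lambda>z. f z * phi n1 n2 x z) = (integral unitsq (\<lambda>z. R z * (p1 (fst z) * p2 (snd z)))
      + integral unitsq (\<lambda>z. f x * (p1 (fst z) * p2 (snd z))))
      + integral unitsq (\<lambda>z. D * (sw (fst z - fst x) * (p1 (fst z) * p2 (snd z))))"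
    by (simp only: int_add2 continuous_intros cR cP1 cP2 cS)
  also have "integral unitsq (\<lambda>z. f x * (p1 (fst z) * p2 (snd z))) = f x"
    using int_phi[of n1 n2 x] unfolding ph by simp
  also have "integral unitsq (\<lambda>z. D * (sw (fst z - fst x) * (p1 (fst z) * p2 (snd z)))) = 0"
  proof -
    have "integral unitsq (\<lambda>z. sw (fst z - fst x) * (p1 (fst z) * p2 (snd z)))
       = integral unitsq (\<lambda>z. (\<lambda>v. sw (v - fst x) * p1 v) (fst z) * p2 (snd z))" by (simp add: algebra_simps)
    also have "\<dots> = integral {0..1} (\<lambda>v. sw (v - fst x) * p1 v) * integral {0..1} p2"
      by (rule int_sep) (intro continuous_intros cont_sw_s cp1 cp2)+
    also have "integral {0..1} (\<lambda>v. sw (v - fst x) * p1 v) = 0" unfolding p1_def by (rule integral_unique[OF I5])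
    finally show ?thesis by simp
  qed
  finally have eq: "integral unitsq (\<lambda>z. f z * phi n1 n2 x z) - f x = integral unitsq (\<lambda>z. R z * (p1 (fst z) * p2 (snd z)))"
    by simp
  have "\<bar>integral unitsq (\<lambda>z. R z * (p1 (fst z) * p2 (snd z)))\<bar>
      \<le> integral unitsq (\<lambda>z. A * 14 * ((\<lambda>v. W1 v * p1 v) (fst z) * p2 (snd z) + p1 (fst z) * (\<lambda>v. W2 v * p2 v) (snd z)))"
  proof (rule int_bound)
    show "continuous_on UNIV (\<lambda>z. R z * (p1 (fst z) * p2 (snd z)))" by (intro continuous_intros cR cP1 cP2)
    show "continuous_on UNIV (\<lambda>z. A * 14 * ((\<lambda>v. W1 v * p1 v) (fst z) * p2 (snd z) + p1 (fst z) * (\<lambda>v. W2 v * p2 v) (snd z)))"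
      by (intro continuous_intros cP1 cP2 cfst csnd cW1 cW2 cp1 cp2)
    fix z
    have nn: "0 \<le> p1 (fst z) * p2 (snd z)" unfolding p1_def p2_def by (simp add: kc_nonneg)
    have "\<bar>R z * (p1 (fst z) * p2 (snd z))\<bar> = \<bar>R z\<bar> * (p1 (fst z) * p2 (snd z))"
      by (simp only: abs_mult[of "R z"] abs_of_nonneg[OF nn])
    also have "\<dots> \<le> A * 14 * (W1 (fst z) + W2 (snd z)) * (p1 (fst z) * p2 (snd z))" by (rule mult_right_mono[OF hR nn])
    finally show "\<bar>R z * (p1 (fst z) * p2 (snd z))\<bar> \<le> A * 14 * ((\<lambda>v. W1 v * p1 v) (fst z) * p2 (snd z) + p1 (fst z) * (\<lambda>v. W2 v * p2 v) (snd z))"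
      by (simp add: algebra_simps)
  qed
  also have "\<dots> = A * 14 * (integral {0..1} (\<lambda>v. W1 v * p1 v) * integral {0..1} p2 + integral {0..1} p1 * integral {0..1} (\<lambda>v. W2 v * p2 v))"
    apply (subst integral_mult_right)
    apply (subst int_add2)
      apply (intro continuous_intros cP1 cP2 cfst csnd cW1 cW2 cp1 cp2)+
    apply (subst int_sep, (intro continuous_intros cW1 cW2 cp1 cp2)+)+
    apply simp
    done
  also have "\<dots> \<le> A * 14 * (2 * (2*real n1+2) powr (-\<alpha>/2) + 2 * (2*real n2+2) powr (-(2*\<alpha>/3)/2))"
  proof -
    have "integral {0..1} (\<lambda>v. W1 v * p1 v) \<le> 2 * (2*real n1+2) powr (-\<alpha>/2)"
      unfolding W1_def p1_def by (rule M0) (use th in auto)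
    moreover have "integral {0..1} (\<lambda>v. W2 v * p2 v) \<le> 2 * (2*real n2+2) powr (-(2*\<alpha>/3)/2)"
      unfolding W2_def p2_def by (rule M0) (use th in auto)
    ultimately show ?thesis unfolding ip1 ip2 using A0 by (intro mult_left_mono) auto
  qed
  finally show ?thesis unfolding eq .
qed

lemma hk1:
  assumes per: "periodic2 g" and hq: "\<And>x y. x \<noteq> y \<Longrightarrow> holder_quot \<theta> g x y \<le> B"
    and th: "0 < \<theta>" "\<theta> \<le> 1"
  shows "\<bar>g z - g (a, snd z)\<bar> \<le> B * 14 * sgw (fst z - a) powr \<theta>"
  using hold_key[OF per hq, of z "(a, snd z)"] th by (simp add: sgw_def)

lemma hk2:
  assumes per: "periodic2 h" and hq: "\<And>x y. x \<noteq> y \<Longrightarrow> holder_quot \<theta> h x y \<le> B"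
    and th: "0 < \<theta>" "\<theta> < 3/2"
  shows "\<bar>h z - h (fst z, a)\<bar> \<le> B * 14 * sgw (snd z - a) powr (2*\<theta>/3)"
  using hold_key[OF per hq th, of z "(fst z, a)"] th by (simp add: sgw_def sw_def)

lemma termG1:
  assumes per: "periodic2 g" and hq: "\<And>x y. x \<noteq> y \<Longrightarrow> holder_quot \<theta> g x y \<le> B"
    and th: "0 < \<theta>" "\<theta> \<le> 1"
  shows "\<bar>integral unitsq (\<lambda>z. g z * part1 (phi n1 n2 x) z)\<bar> \<le> B * 14 * (6 * pi * (2*real n1+2) powr ((1-\<theta>)/2))"
proof -
  have B0: "0 \<le> B" using hq[of "(0,0)" "(1,0)"] quot_nonneg[of \<theta> g "(0,0)" "(1,0)"] by simp
  have cg: "continuous_on UNIV g" by (rule hold_cont[OF per hq]) (use th in auto)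
  have "\<bar>integral unitsq (\<lambda>z. g z * ((\<lambda>v. kd n1 (v - fst x)) (fst z) * (\<lambda>v. kc n2 (v - snd x)) (snd z)))\<bar>
      \<le> (B * 14) * (6 * pi * (2*real n1+2) powr ((1-\<theta>)/2))"
  proof (rule term_x1[where W = "\<lambda>v. sgw (v - fst x) powr \<theta>" and a = "fst x"])
    show "continuous_on UNIV g" by (rule cg)
    show "continuous_on UNIV (\<lambda>v. kd n1 (v - fst x))" by (rule cont_kd_s)
    show "continuous_on UNIV (\<lambda>v. kc n2 (v - snd x))" by (rule cont_kc_s)
    show "continuous_on UNIV (\<lambda>v. sgw (v - fst x) powr \<theta>)" by (rule cont_sgw_pow) (use th in simp)
    show "\<bar>g z - g (fst x, snd z)\<bar> \<le> B * 14 * sgw (fst z - fst x) powr \<theta>" for z by (rule hk1[OF per hq th])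
    show "0 \<le> sgw (v - fst x) powr \<theta>" for v by simp
    show "0 \<le> B * 14" using B0 by simp
    show "integral {0..1} (\<lambda>v. kd n1 (v - fst x)) = 0" by (rule integral_unique[OF I4a])
    show "0 \<le> kc n2 (v - snd x)" for v by (rule kc_nonneg)
    show "integral {0..1} (\<lambda>v. kc n2 (v - snd x)) = 1" by (rule int_kc)
    show "integral {0..1} (\<lambda>v. sgw (v - fst x) powr \<theta> * \<bar>kd n1 (v - fst x)\<bar>) \<le> 6 * pi * (2*real n1+2) powr ((1-\<theta>)/2)"
      by (rule M1) (use th in auto)
  qed
  then show ?thesis unfolding phi_part1 by simp
qed

lemma termG2:
  assumes per: "periodic2 g" and hq: "\<And>x y. x \<noteq> y \<Longrightarrow> holder_quot \<theta> g x y \<le> B"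
    and th: "0 < \<theta>" "\<theta> \<le> 1"
  shows "\<bar>integral unitsq (\<lambda>z. g z * part1 (part1 (phi n1 n2 x)) z)\<bar> \<le> B * 14 * (6 * pi^2 * (2*real n1+2) powr (1 - \<theta>/2))"
proof -
  have B0: "0 \<le> B" using hq[of "(0,0)" "(1,0)"] quot_nonneg[of \<theta> g "(0,0)" "(1,0)"] by simp
  have cg: "continuous_on UNIV g" by (rule hold_cont[OF per hq]) (use th in auto)
  have "\<bar>integral unitsq (\<lambda>z. g z * ((\<lambda>v. kdd n1 (v - fst x)) (fst z) * (\<lambda>v. kc n2 (v - snd x)) (snd z)))\<bar>
      \<le> (B * 14) * (6 * pi^2 * (2*real n1+2) powr (1 - \<theta>/2))"
  proof (rule term_x1[where W = "\<lambda>v. sgw (v - fst x) powr \<theta>" and a = "fst x"])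
    show "continuous_on UNIV g" by (rule cg)
    show "continuous_on UNIV (\<lambda>v. kdd n1 (v - fst x))" by (rule cont_kdd_s)
    show "continuous_on UNIV (\<lambda>v. kc n2 (v - snd x))" by (rule cont_kc_s)
    show "continuous_on UNIV (\<lambda>v. sgw (v - fst x) powr \<theta>)" by (rule cont_sgw_pow) (use th in simp)
    show "\<bar>g z - g (fst x, snd z)\<bar> \<le> B * 14 * sgw (fst z - fst x) powr \<theta>" for z by (rule hk1[OF per hq th])
    show "0 \<le> sgw (v - fst x) powr \<theta>" for v by simp
    show "0 \<le> B * 14" using B0 by simp
    show "integral {0..1} (\<lambda>v. kdd n1 (v - fst x)) = 0" by (rule integral_unique[OF I4b])
    show "0 \<le> kc n2 (v - snd x)" for v by (rule kc_nonneg)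
    show "integral {0..1} (\<lambda>v. kc n2 (v - snd x)) = 1" by (rule int_kc)
    show "integral {0..1} (\<lambda>v. sgw (v - fst x) powr \<theta> * \<bar>kdd n1 (v - fst x)\<bar>) \<le> 6 * pi^2 * (2*real n1+2) powr (1 - \<theta>/2)"
      by (rule M2) (use th in auto)
  qed
  then show ?thesis unfolding phi_part11 by simp
qed

lemma termH:
  assumes per: "periodic2 h" and hq: "\<And>x y. x \<noteq> y \<Longrightarrow> holder_quot \<theta> h x y \<le> B"
    and th: "0 < \<theta>" "\<theta> < 3/2"
  shows "\<bar>integral unitsq (\<lambda>z. h z * part2 (phi n1 n2 x) z)\<bar> \<le> B * 14 * (6 * pi * (2*real n2+2) powr ((1-2*\<theta>/3)/2))"
proof -
  have B0: "0 \<le> B" using hq[of "(0,0)" "(1,0)"] quot_nonneg[of \<theta> h "(0,0)" "(1,0)"] by simp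
  have ch: "continuous_on UNIV h" by (rule hold_cont[OF per hq th])
  have "\<bar>integral unitsq (\<lambda>z. h z * ((\<lambda>v. kc n1 (v - fst x)) (fst z) * (\<lambda>v. kd n2 (v - snd x)) (snd z)))\<bar>
      \<le> (B * 14) * (6 * pi * (2*real n2+2) powr ((1-2*\<theta>/3)/2))"
  proof (rule term_x2[where W = "\<lambda>v. sgw (v - snd x) powr (2*\<theta>/3)" and a = "snd x"])
    show "continuous_on UNIV h" by (rule ch)
    show "continuous_on UNIV (\<lambda>v. kc n1 (v - fst x))" by (rule cont_kc_s)
    show "continuous_on UNIV (\<lambda>v. kd n2 (v - snd x))" by (rule cont_kd_s)
    show "continuous_on UNIV (\<lambda>v. sgw (v - snd x) powr (2*\<theta>/3))" by (rule cont_sgw_pow) (use th in simp)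
    show "\<bar>h z - h (fst z, snd x)\<bar> \<le> B * 14 * sgw (snd z - snd x) powr (2*\<theta>/3)" for z by (rule hk2[OF per hq th])
    show "0 \<le> sgw (v - snd x) powr (2*\<theta>/3)" for v by simp
    show "0 \<le> B * 14" using B0 by simp
    show "integral {0..1} (\<lambda>v. kd n2 (v - snd x)) = 0" by (rule integral_unique[OF I4a])
    show "0 \<le> kc n1 (v - fst x)" for v by (rule kc_nonneg)
    show "integral {0..1} (\<lambda>v. kc n1 (v - fst x)) = 1" by (rule int_kc)
    show "integral {0..1} (\<lambda>v. sgw (v - snd x) powr (2*\<theta>/3) * \<bar>kd n2 (v - snd x)\<bar>) \<le> 6 * pi * (2*real n2+2) powr ((1-2*\<theta>/3)/2)"
      by (rule M1) (use th in auto)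
  qed
  then show ?thesis unfolding phi_part2 by simp
qed

lemma choose_n:
  fixes u :: real
  assumes "4 \<le> u"
  shows "\<exists>n. u \<le> 2*real n + 2 \<and> 2*real n + 2 \<le> 2*u"
proof -
  define n where "n = nat \<lceil>u/2\<rceil>"
  have "real n = of_int \<lceil>u/2\<rceil>" unfolding n_def using assms by simp
  moreover have "u/2 \<le> of_int \<lceil>u/2\<rceil>" "of_int \<lceil>u/2\<rceil> < u/2 + 1" by linarith+
  ultimately have "u \<le> 2*real n + 2 \<and> 2*real n + 2 \<le> 2*u" using assms by linarith
  then show ?thesis by blast
qed

lemma pow_le_neg:
  fixes m u a :: real
  assumes "0 < u" "u \<le> m" "a \<le> 0"
  shows "m powr a \<le> u powr a"
  by (rule powr_mono2') (use assms in auto)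

lemma pow_le_pos:
  fixes m u a :: real
  assumes "0 \<le> m" "m \<le> u" "0 \<le> a"
  shows "m powr a \<le> u powr a"
  by (rule powr_mono2) (use assms in auto)

lemma scale1:
  fixes t a m :: real
  assumes t: "0 < t" and m: "t powr (-2) \<le> m" "m \<le> 2 * t powr (-2)" and a: "0 < a" "a < 2"
  shows "m powr (-a/2) \<le> t powr a" and "m powr (a/2) \<le> 2 * t powr (-a)"
proof -
  have tp: "0 < t powr (-2)" using t by simp
  have "m powr (-a/2) \<le> (t powr (-2)) powr (-a/2)" by (rule pow_le_neg) (use tp m a in auto)
  also have "\<dots> = t powr a" by (simp add: powr_powr)
  finally show "m powr (-a/2) \<le> t powr a" .
  have "m powr (a/2) \<le> (2 * t powr (-2)) powr (a/2)" by (rule pow_le_pos) (use tp m a in auto)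
  also have "\<dots> = 2 powr (a/2) * t powr (-a)" using t by (simp add: powr_mult powr_powr)
  also have "2 powr (a/2) \<le> (2::real) powr 1" by (rule powr_mono) (use a in auto)
  then have "2 powr (a/2) * t powr (-a) \<le> 2 * t powr (-a)" by (intro mult_right_mono) auto
  finally show "m powr (a/2) \<le> 2 * t powr (-a)" .
qed

lemma scale2:
  fixes t a m :: real
  assumes t: "0 < t" and m: "t powr (-3) \<le> m" "m \<le> 2 * t powr (-3)" and a: "0 < a" "a < 3"
  shows "m powr (-a/3) \<le> t powr a" and "m powr (a/3) \<le> 2 * t powr (-a)"
proof -
  have tp: "0 < t powr (-3)" using t by simp
  have "m powr (-a/3) \<le> (t powr (-3)) powr (-a/3)" by (rule pow_le_neg) (use tp m a in auto)
  also have "\<dots> = t powr a" by (simp add: powr_powr)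
  finally show "m powr (-a/3) \<le> t powr a" .
  have "m powr (a/3) \<le> (2 * t powr (-3)) powr (a/3)" by (rule pow_le_pos) (use tp m a in auto)
  also have "\<dots> = 2 powr (a/3) * t powr (-a)" using t by (simp add: powr_mult powr_powr)
  also have "2 powr (a/3) \<le> (2::real) powr 1" by (rule powr_mono) (use a in auto)
  then have "2 powr (a/3) * t powr (-a) \<le> 2 * t powr (-a)" by (intro mult_right_mono) auto
  finally show "m powr (a/3) \<le> 2 * t powr (-a)" .
qed

lemma core_bound:
  fixes f :: "real \<times> real \<Rightarrow> real" and I :: "nat \<Rightarrow> nat \<Rightarrow> real \<times> real \<Rightarrow> real"
  assumes E1: "\<And>n1 n2 x. \<bar>I n1 n2 x - f x\<bar> \<le> A * 14 * (2 * (2*real n1+2) powr (-\<alpha>/2) + 2 * (2*real n2+2) powr (-(2*\<alpha>/3)/2))"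
    and E2: "\<And>n1 n2 x. \<bar>I n1 n2 x - c\<bar> \<le> 84 * pi^2 * (Bg * (2*real n1+2) powr (-\<beta>/2) + Bh * (2*real n2+2) powr (-\<beta>/3))"
    and A0: "0 \<le> A" and B0: "0 \<le> Bg" "0 \<le> Bh"
    and al: "0 < \<alpha>" "\<alpha> < 3/2" and be: "-3/2 < \<beta>" "\<beta> < 0"
    and t: "0 < t" "t \<le> 1/2"
  shows "\<bar>f x - c\<bar> \<le> 168 * pi^2 * (A * t powr \<alpha> + (Bg + Bh) * t powr \<beta>)"
proof -
  have t2: "4 \<le> t powr (-2)"
  proof -
    have "(1/2) powr (-2) \<le> t powr (-2)" by (rule pow_le_neg) (use t in auto)
    moreover have "(1/2::real) powr (-2) = 4" by (simp add: powr_minus powr_numeral power2_eq_square)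
    ultimately show ?thesis by simp
  qed
  have t3: "4 \<le> t powr (-3)"
  proof -
    have "(1/2) powr (-3) \<le> t powr (-3)" by (rule pow_le_neg) (use t in auto)
    moreover have "(1/2::real) powr (-3) = 8" by (simp add: powr_minus powr_numeral power3_eq_cube)
    ultimately show ?thesis by simp
  qed
  obtain n1 where n1: "t powr (-2) \<le> 2*real n1+2" "2*real n1+2 \<le> 2 * t powr (-2)" using choose_n[OF t2] by blast
  obtain n2 where n2: "t powr (-3) \<le> 2*real n2+2" "2*real n2+2 \<le> 2 * t powr (-3)" using choose_n[OF t3] by blast
  have a1: "(2*real n1+2) powr (-\<alpha>/2) \<le> t powr \<alpha>" by (rule scale1(1)[OF t(1) n1]) (use al in auto)
  have a2: "(2*real n2+2) powr (-(2*\<alpha>/3)/2) \<le> t powr \<alpha>"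
  proof -
    have "(2*real n2+2) powr (-\<alpha>/3) \<le> t powr \<alpha>" by (rule scale2(1)[OF t(1) n2]) (use al in auto)
    moreover have "-(2*\<alpha>/3)/2 = -\<alpha>/3" by simp
    ultimately show ?thesis by simp
  qed
  have b1: "(2*real n1+2) powr (-\<beta>/2) \<le> 2 * t powr \<beta>"
    using scale1(2)[OF t(1) n1, of "-\<beta>"] be by simp
  have b2: "(2*real n2+2) powr (-\<beta>/3) \<le> 2 * t powr \<beta>"
    using scale2(2)[OF t(1) n2, of "-\<beta>"] be by simp
  have "\<bar>f x - c\<bar> \<le> \<bar>I n1 n2 x - f x\<bar> + \<bar>I n1 n2 x - c\<bar>" by arith
  also have "\<dots> \<le> A * 14 * (2 * t powr \<alpha> + 2 * t powr \<alpha>) + 84 * pi^2 * (Bg * (2 * t powr \<beta>) + Bh * (2 * t powr \<beta>))"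
  proof (rule add_mono)
    show "\<bar>I n1 n2 x - f x\<bar> \<le> A * 14 * (2 * t powr \<alpha> + 2 * t powr \<alpha>)"
    proof -
      have "2 * (2*real n1+2) powr (-\<alpha>/2) + 2 * (2*real n2+2) powr (-(2*\<alpha>/3)/2) \<le> 2 * t powr \<alpha> + 2 * t powr \<alpha>"
        using a1 a2 by simp
      from mult_left_mono[OF this, of "A * 14"] A0 E1[of n1 n2 x] show ?thesis by simp
    qed
    have "Bg * (2*real n1+2) powr (-\<beta>/2) + Bh * (2*real n2+2) powr (-\<beta>/3) \<le> Bg * (2 * t powr \<beta>) + Bh * (2 * t powr \<beta>)"
      using b1 b2 B0 by (intro add_mono mult_left_mono) auto
    then show "\<bar>I n1 n2 x - c\<bar> \<le> 84 * pi^2 * (Bg * (2 * t powr \<beta>) + Bh * (2 * t powr \<beta>))"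
      using E2[of n1 n2 x] mult_left_mono[of _ _ "84 * pi^2"] by (meson dual_order.trans zero_le_mult_iff zero_le_numeral zero_le_power2)
  qed
  also have "\<dots> \<le> 168 * pi^2 * (A * t powr \<alpha> + (Bg + Bh) * t powr \<beta>)"
  proof -
    have "1 \<le> pi^2" using pi_gt3 by (intro one_le_power) simp
    then have "56 \<le> 168 * pi^2" by simp
    moreover have "0 \<le> A * t powr \<alpha>" using A0 by simp
    ultimately have "56 * (A * t powr \<alpha>) \<le> (168 * pi^2) * (A * t powr \<alpha>)" by (rule mult_right_mono)
    then show ?thesis by (simp add: algebra_simps)
  qed
  finally show ?thesis .
qed

lemma opt:
  fixes X A N p q K L :: real
  assumes A: "0 < A" and N: "0 < N" and p: "0 < p" and q: "q < 0" and K: "0 \<le> K"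
    and XA: "X \<le> K * A"
    and Xt: "\<And>t. 0 < t \<Longrightarrow> t \<le> 1/2 \<Longrightarrow> X \<le> K * (A * t powr p + N * t powr q)"
    and L: "L = (N/A) powr (1/(p - q))"
  shows "X \<le> K * (2 + 2 powr p) * A * L powr p"
proof -
  have L0: "0 < L" unfolding L using A N by simp
  have NL: "N = A * L powr (p - q)"
  proof -
    have "L powr (p - q) = (N/A) powr ((1/(p-q)) * (p-q))" unfolding L by (simp add: powr_powr)
    also have "(1/(p-q)) * (p-q) = 1" using p q by simp
    finally show ?thesis using A N by simp
  qed
  have Lp: "0 \<le> K * A * L powr p" using K A by simp
  show ?thesis
  proof (cases "L \<le> 1/2")
    case True
    have "X \<le> K * (A * L powr p + N * L powr q)" by (rule Xt[OF L0 True])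
    also have "N * L powr q = A * L powr p" unfolding NL by (simp add: powr_add[symmetric] mult.assoc)
    finally have "X \<le> 2 * (K * A * L powr p)" by (simp add: algebra_simps)
    also have "\<dots> \<le> (2 + 2 powr p) * (K * A * L powr p)" by (rule mult_right_mono) (use Lp in auto)
    finally show ?thesis by (simp add: algebra_simps)
  next
    case False
    have "1 \<le> (2*L) powr p" using False p by (intro ge_one_powr_ge_zero) auto
    then have "K * A * 1 \<le> K * A * (2*L) powr p" using K A by (intro mult_left_mono) auto
    also have "(2*L) powr p = 2 powr p * L powr p" using L0 by (simp add: powr_mult)
    finally have "X \<le> 2 powr p * (K * A * L powr p)" using XA by (simp add: algebra_simps)
    also have "\<dots> \<le> (2 + 2 powr p) * (K * A * L powr p)" by (rule mult_right_mono) (use Lp in auto)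
    finally show ?thesis by (simp add: algebra_simps)
  qed
qed

lemma dT_pos: "x \<noteq> y \<Longrightarrow> 0 < dT y x"
proof -
  assume "x \<noteq> y"
  then have "fst x \<noteq> fst y \<or> snd x \<noteq> snd y" by (auto simp: prod_eq_iff)
  then show ?thesis unfolding dT_def by (auto simp: add_pos_nonneg add_nonneg_pos)
qed

lemma dT_fst: "\<bar>fst y - fst x\<bar> \<le> dT y x" unfolding dT_def by simp

lemma quot_le:
  assumes "x \<noteq> y" "holder_quot a f x y \<le> M"
  shows "(if a \<le> 1 then \<bar>f y - f x\<bar> else \<bar>f y - f x - part1 f x * (fst y - fst x)\<bar>) \<le> M * dT y x powr a"
  using assms dT_pos[OF assms(1)] unfolding holder_quot_def by (simp add: divide_le_eq)

lemma le_quot: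
  assumes "x \<noteq> y" "(if a \<le> 1 then \<bar>f y - f x\<bar> else \<bar>f y - f x - part1 f x * (fst y - fst x)\<bar>) \<le> M * dT y x powr a"
  shows "holder_quot a f x y \<le> M"
  using assms dT_pos[OF assms(1)] unfolding holder_quot_def by (simp add: divide_le_eq)

lemma le_scale: "X \<le> a * M \<Longrightarrow> 0 \<le> M \<Longrightarrow> a \<le> b \<Longrightarrow> X \<le> b * (M::real)"
  using mult_right_mono[of a b M] by linarith

lemma holder_interp:
  fixes f :: "real \<times> real \<Rightarrow> real"
  assumes g: "0 < \<gamma>" "\<gamma> < \<alpha>" and A: "0 < A" and L: "0 < L" and K: "0 \<le> K0" "0 \<le> K1"
    and S: "\<And>z. \<bar>f z - c\<bar> \<le> K0 * A * L powr \<alpha>"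
    and Dd: "1 < \<alpha> \<Longrightarrow> \<forall>z. \<bar>part1 f z\<bar> \<le> K1 * A * L powr (\<alpha> - 1)"
    and hq: "\<And>x y. x \<noteq> y \<Longrightarrow> holder_quot \<alpha> f x y \<le> A"
    and xy: "x \<noteq> y"
  shows "holder_quot \<gamma> f x y \<le> (2*K0 + K1 + 1) * A * L powr (\<alpha> - \<gamma>)"
proof (rule le_quot[OF xy])
  define r where "r = dT y x"
  have r0: "0 < r" unfolding r_def by (rule dT_pos[OF xy])
  have y1: "\<bar>fst y - fst x\<bar> \<le> r" unfolding r_def by (rule dT_fst)
  define D where "D = part1 f x"
  define M where "M = A * L powr (\<alpha> - \<gamma>) * r powr \<gamma>"
  have M0: "0 \<le> M" unfolding M_def using A by simp
  have na: "(if \<alpha> \<le> 1 then \<bar>f y - f x\<bar> else \<bar>f y - f x - D * (fst y - fst x)\<bar>) \<le> A * r powr \<alpha>"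
    unfolding r_def D_def by (rule quot_le[OF xy hq[OF xy]])
  have fyx: "\<bar>f y - f x\<bar> \<le> 2 * K0 * A * L powr \<alpha>" using S[of x] S[of y] by linarith
  have ra: "r \<le> L \<Longrightarrow> A * r powr \<alpha> \<le> M"
  proof -
    assume rL: "r \<le> L"
    have "r powr (\<alpha> - \<gamma>) \<le> L powr (\<alpha> - \<gamma>)" by (rule powr_mono2) (use g r0 rL in auto)
    then have "A * r powr (\<alpha> - \<gamma>) * r powr \<gamma> \<le> A * L powr (\<alpha> - \<gamma>) * r powr \<gamma>" using A by (intro mult_right_mono mult_left_mono) auto
    then show ?thesis unfolding M_def by (simp add: powr_add[symmetric] mult.assoc)
  qed
  have La: "L \<le> r \<Longrightarrow> A * L powr \<alpha> \<le> M"
  proof -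
    assume rL: "L \<le> r"
    have "L powr \<gamma> \<le> r powr \<gamma>" by (rule powr_mono2) (use g L rL in auto)
    then have "A * L powr (\<alpha> - \<gamma>) * L powr \<gamma> \<le> A * L powr (\<alpha> - \<gamma>) * r powr \<gamma>" using A by (intro mult_left_mono) auto
    then show ?thesis unfolding M_def by (simp add: powr_add[symmetric] mult.assoc)
  qed
  have Lr1: "A * L powr (\<alpha> - 1) * r \<le> M" if h: "(\<gamma> \<le> 1 \<and> r \<le> L) \<or> (1 < \<gamma> \<and> L \<le> r)"
  proof -
    have "L powr (\<gamma> - 1) \<le> r powr (\<gamma> - 1)"
    proof (cases "\<gamma> \<le> 1")
      case True
      then have "r \<le> L" using h by auto
      then show ?thesis using True r0 by (intro powr_mono2') auto
    next
      case False
      then have "L \<le> r" using h by auto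
      then show ?thesis using False L by (intro powr_mono2) auto
    qed
    then have "A * L powr (\<alpha> - \<gamma>) * (L powr (\<gamma> - 1) * r) \<le> A * L powr (\<alpha> - \<gamma>) * (r powr (\<gamma> - 1) * r)"
      using A r0 by (intro mult_left_mono mult_right_mono) auto
    moreover have "L powr (\<alpha> - \<gamma>) * L powr (\<gamma> - 1) = L powr (\<alpha> - 1)" by (simp add: powr_add[symmetric])
    moreover have "r powr (\<gamma> - 1) * r = r powr \<gamma>"
    proof -
      have "r powr \<gamma> = r powr ((\<gamma> - 1) + 1)" by simp
      also have "\<dots> = r powr (\<gamma> - 1) * r powr 1" by (rule powr_add)
      also have "r powr 1 = r" using r0 by simp
      finally show ?thesis by simp
    qed
    ultimately show ?thesis unfolding M_def by (metis mult.assoc)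
  qed
  have Dr: "1 < \<alpha> \<Longrightarrow> \<bar>D * (fst y - fst x)\<bar> \<le> K1 * (A * L powr (\<alpha> - 1) * r)"
  proof -
    assume "1 < \<alpha>"
    then have "\<bar>D\<bar> \<le> K1 * A * L powr (\<alpha> - 1)" using Dd unfolding D_def by blast
    then have "\<bar>D\<bar> * \<bar>fst y - fst x\<bar> \<le> K1 * A * L powr (\<alpha> - 1) * r" by (intro mult_mono y1) auto
    then show ?thesis by (simp add: abs_mult mult.assoc)
  qed
  have fyxM: "L \<le> r \<Longrightarrow> \<bar>f y - f x\<bar> \<le> 2 * K0 * M"
  proof -
    assume "L \<le> r"
    from mult_left_mono[OF La[OF this], of "2*K0"] K have "2*K0*(A * L powr \<alpha>) \<le> 2*K0*M" by simp
    then show ?thesis using fyx by (simp add: mult.assoc)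
  qed
  have DM: "1 < \<alpha> \<Longrightarrow> (\<gamma> \<le> 1 \<and> r \<le> L) \<or> (1 < \<gamma> \<and> L \<le> r) \<Longrightarrow> \<bar>D * (fst y - fst x)\<bar> \<le> K1 * M"
  proof -
    assume a: "1 < \<alpha>" and h: "(\<gamma> \<le> 1 \<and> r \<le> L) \<or> (1 < \<gamma> \<and> L \<le> r)"
    from mult_left_mono[OF Lr1[OF h], of K1] K have "K1 * (A * L powr (\<alpha> - 1) * r) \<le> K1 * M" by simp
    then show ?thesis using Dr[OF a] by linarith
  qed
  have c1: "2 * K0 \<le> 2*K0 + K1 + 1" "1 \<le> 2*K0 + K1 + 1" "K1 + 1 \<le> 2*K0 + K1 + 1" "2*K0 + K1 \<le> 2*K0 + K1 + 1"
    using K by auto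
  have main: "(if \<gamma> \<le> 1 then \<bar>f y - f x\<bar> else \<bar>f y - f x - D * (fst y - fst x)\<bar>) \<le> (2*K0 + K1 + 1) * M"
  proof (cases "\<gamma> \<le> 1")
    case True
    show ?thesis
    proof (cases "L \<le> r")
      case True
      have "\<bar>f y - f x\<bar> \<le> (2*K0 + K1 + 1) * M" by (rule le_scale[OF fyxM[OF True] M0 c1(1)])
      then show ?thesis using \<open>\<gamma> \<le> 1\<close> by simp
    next
      case False
      then have rL: "r \<le> L" by simp
      show ?thesis
      proof (cases "\<alpha> \<le> 1")
        case True
        then have "\<bar>f y - f x\<bar> \<le> 1 * M" using na ra[OF rL] by simp
        from le_scale[OF this M0 c1(2)] show ?thesis using \<open>\<gamma> \<le> 1\<close> by simp
      next
        case False
        then have "\<bar>f y - f x - D * (fst y - fst x)\<bar> \<le> M" using na ra[OF rL] by simp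
        moreover have "\<bar>D * (fst y - fst x)\<bar> \<le> K1 * M" using DM False rL \<open>\<gamma> \<le> 1\<close> by simp
        ultimately have "\<bar>f y - f x\<bar> \<le> K1 * M + M" by arith
        then have "\<bar>f y - f x\<bar> \<le> (K1 + 1) * M" by (simp add: algebra_simps)
        from le_scale[OF this M0 c1(3)] show ?thesis using \<open>\<gamma> \<le> 1\<close> by simp
      qed
    qed
  next
    case False
    then have a1: "1 < \<alpha>" using g by simp
    show ?thesis
    proof (cases "r \<le> L")
      case True
      then have "\<bar>f y - f x - D * (fst y - fst x)\<bar> \<le> 1 * M" using na ra[OF True] a1 by simp
      from le_scale[OF this M0 c1(2)] show ?thesis using False by simp
    next
      case rL: False
      have "\<bar>f y - f x\<bar> \<le> 2 * K0 * M" using fyxM rL by simp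
      moreover have "\<bar>D * (fst y - fst x)\<bar> \<le> K1 * M" using DM[OF a1] rL False by simp
      ultimately have "\<bar>f y - f x - D * (fst y - fst x)\<bar> \<le> 2 * K0 * M + K1 * M" by arith
      then have "\<bar>f y - f x - D * (fst y - fst x)\<bar> \<le> (2 * K0 + K1) * M" by (simp add: algebra_simps)
      from le_scale[OF this M0 c1(4)] show ?thesis using False by simp
    qed
  qed
  show "(if \<gamma> \<le> 1 then \<bar>f y - f x\<bar> else \<bar>f y - f x - part1 f x * (fst y - fst x)\<bar>) \<le> (2*K0 + K1 + 1) * A * L powr (\<alpha> - \<gamma>) * dT y x powr \<gamma>"
    using main unfolding M_def D_def r_def by (simp add: mult.assoc)
qed

lemma inf_step:
  fixes S :: "real set" and Q C B lam :: real
  assumes S: "S \<noteq> {}" "\<And>e. e \<in> S \<Longrightarrow> 0 \<le> e" and lam: "0 < lam" and C: "0 \<le> C" and B: "0 \<le> B"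
    and H: "\<And>e \<delta>. e \<in> S \<Longrightarrow> 0 < \<delta> \<Longrightarrow> Q \<le> C * (e + \<delta>) powr lam * B"
  shows "Q \<le> C * Inf S powr lam * B"
proof -
  define I where "I = Inf S"
  have I0: "0 \<le> I" unfolding I_def using S by (intro cInf_greatest) auto
  have le: "Q \<le> C * (I + 2*\<epsilon>) powr lam * B" if eps: "0 < \<epsilon>" for \<epsilon>
  proof -
    have "Inf S < I + \<epsilon>" unfolding I_def using eps by simp
    then obtain e where e: "e \<in> S" "e < I + \<epsilon>" using cInf_lessD[OF S(1)] by blast
    have "Q \<le> C * (e + \<epsilon>) powr lam * B" by (rule H[OF e(1) eps])
    also have "(e + \<epsilon>) powr lam \<le> (I + 2*\<epsilon>) powr lam" by (rule powr_mono2) (use lam S(2)[OF e(1)] e eps in auto)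
    then have "C * (e + \<epsilon>) powr lam * B \<le> C * (I + 2*\<epsilon>) powr lam * B" using B C by (intro mult_right_mono mult_left_mono) auto
    finally show ?thesis .
  qed
  have ev: "eventually (\<lambda>\<epsilon>. 0 \<le> I + 2*\<epsilon>) (at_right (0::real))"
    using eventually_at_right_less[of "0::real"] by (rule eventually_mono) (use I0 in auto)
  have lim: "((\<lambda>\<epsilon>. C * (I + 2*\<epsilon>) powr lam * B) \<longlongrightarrow> C * (I + 2*0) powr lam * B) (at_right 0)"
    by (intro tendsto_intros tendsto_powr') (use lam ev in auto)
  have "Q \<le> C * (I + 2*0) powr lam * B"
    by (rule tendsto_lowerbound[OF lim]) (auto simp: eventually_at_right_less intro: le eventually_mono[OF eventually_at_right_less])
  then show ?thesis unfolding I_def by simp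
qed

lemma conv_pow:
  fixes A N a d :: real
  assumes "0 < A" "0 < N" "0 < d"
  shows "A * ((N/A) powr (1/d)) powr a = N powr (a/d) * A powr (1 - a/d)"
proof -
  have "((N/A) powr (1/d)) powr a = (N/A) powr (a/d)" by (simp add: powr_powr)
  also have "\<dots> = N powr (a/d) / A powr (a/d)" using assms by (simp add: powr_divide)
  finally have "A * ((N/A) powr (1/d)) powr a = A powr 1 * N powr (a/d) / A powr (a/d)" using assms by simp
  also have "\<dots> = N powr (a/d) * (A powr 1 / A powr (a/d))" by simp
  also have "A powr 1 / A powr (a/d) = A powr (1 - a/d)" by (simp add: powr_diff)
  finally show ?thesis .
qed

lemma D_interp:
  fixes f :: "real \<times> real \<Rightarrow> real"
  assumes hq: "\<And>x y. x \<noteq> y \<Longrightarrow> holder_quot \<alpha> f x y \<le> A" and a1: "1 < \<alpha>"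
    and C: "\<And>t x. 0 < t \<Longrightarrow> t \<le> 1/2 \<Longrightarrow> \<bar>f x - c\<bar> \<le> K * (A * t powr \<alpha> + N * t powr \<beta>)"
    and K: "0 \<le> K" and A: "0 \<le> A" and N: "0 \<le> N" and t: "0 < t" "t \<le> 1/2"
  shows "\<bar>part1 f x\<bar> \<le> (2*K+1) * (A * t powr (\<alpha> - 1) + N * t powr (\<beta> - 1))"
proof -
  define y where "y = (fst x + t, snd x)"
  have xy: "x \<noteq> y" unfolding y_def using t by (auto simp: prod_eq_iff)
  have dt: "dT y x = t" unfolding y_def dT_def using t by simp
  have "\<bar>f y - f x - part1 f x * t\<bar> \<le> A * t powr \<alpha>"
    using quot_le[OF xy hq[OF xy]] a1 dt unfolding y_def by simp
  moreover have "\<bar>f y - f x\<bar> \<le> 2 * K * (A * t powr \<alpha> + N * t powr \<beta>)" using C[OF t, of x] C[OF t, of y] by linarith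
  ultimately have "\<bar>part1 f x * t\<bar> \<le> 2 * K * (A * t powr \<alpha> + N * t powr \<beta>) + A * t powr \<alpha>" by arith
  also have "\<dots> \<le> (2*K+1) * (A * t powr \<alpha> + N * t powr \<beta>)" using N by (simp add: algebra_simps)
  also have "A * t powr \<alpha> + N * t powr \<beta> = (A * t powr (\<alpha> - 1) + N * t powr (\<beta> - 1)) * t"
  proof -
    have "t powr \<alpha> = t powr (\<alpha> - 1) * t" "t powr \<beta> = t powr (\<beta> - 1) * t"
      using t by (simp_all add: powr_add[symmetric] powr_diff)
    then show ?thesis by (simp add: algebra_simps)
  qed
  finally have "\<bar>part1 f x\<bar> * t \<le> ((2*K+1) * (A * t powr (\<alpha> - 1) + N * t powr (\<beta> - 1))) * t"
    using t by (simp add: abs_mult mult.assoc)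
  then show ?thesis using t by simp
qed

lemma hq_of_fin: "holder_fin \<theta> f \<Longrightarrow> x \<noteq> y \<Longrightarrow> holder_quot \<theta> f x y \<le> holder_sn \<theta> f"
proof -
  assume fin: "holder_fin \<theta> f" and xy: "x \<noteq> y"
  have "holder_quot \<theta> f x y \<in> {holder_quot \<theta> f x y | x y. x \<noteq> y}" using xy by blast
  moreover have "bdd_above {holder_quot \<theta> f x y | x y. x \<noteq> y}" using fin unfolding holder_fin_def by (rule conjunct2)
  ultimately show ?thesis unfolding holder_sn_def by (rule cSup_upper)
qed

lemma sn_nonneg: "holder_fin \<theta> f \<Longrightarrow> 0 \<le> holder_sn \<theta> f"
  using hq_of_fin[of \<theta> f "(0,0)" "(1,0)"] quot_nonneg[of \<theta> f "(0,0)" "(1,0)"] by simp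

lemma kd0: "kd 0 = (\<lambda>v. 0)" by (auto simp: kd_def)
lemma kdd0: "kdd 0 = (\<lambda>v. 0)" by (auto simp: kdd_def)

lemma phi00_parts: "part1 (phi 0 0 x) = (\<lambda>z. 0)" "part2 (phi 0 0 x) = (\<lambda>z. 0)" "part1 (part1 (phi 0 0 x)) = (\<lambda>z. 0)"
proof -
  show "part1 (part1 (phi 0 0 x)) = (\<lambda>z. 0)" unfolding phi_part11 kdd0 by auto
  show "part1 (phi 0 0 x) = (\<lambda>z. 0)" unfolding phi_part1 kd0 by auto
  show "part2 (phi 0 0 x) = (\<lambda>z. 0)" unfolding phi_part2 kd0 by auto
qed

lemma pi_le_sq: "pi \<le> pi^2"
proof -
  have "1 * pi \<le> pi * pi" using pi_gt3 by (intro mult_right_mono) auto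
  then show ?thesis by (simp add: power2_eq_square)
qed

lemma E2_from_neg:
  fixes f :: "real \<times> real \<Rightarrow> real"
  assumes be: "-3/2 < \<beta>" "\<beta> < 0" and e: "e \<in> neg_set \<beta> f"
  shows "\<exists>c Bg Bh. 0 \<le> Bg \<and> 0 \<le> Bh \<and> Bg + Bh \<le> e \<and>
    (\<forall>n1 n2 x. \<bar>integral unitsq (\<lambda>z. f z * phi n1 n2 x z) - c\<bar> \<le> 84*pi^2*(Bg*(2*real n1+2) powr (-\<beta>/2) + Bh*(2*real n2+2) powr (-\<beta>/3)))
    \<and> (\<forall>x. integral unitsq (\<lambda>z. f z * phi 0 0 x z) = c)"
proof (cases "-1 < \<beta>")
  case True
  then obtain c g h where eq: "e = \<bar>c\<bar> + holder_sn (\<beta> + 1) g + holder_sn (\<beta> + 3/2) h"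
    and pg: "periodic2 g" and ph: "periodic2 h" and fg: "holder_fin (\<beta> + 1) g" and fh: "holder_fin (\<beta> + 3/2) h"
    and dc: "decomp1 f c g h"
    using e unfolding neg_set_def by auto
  define Bg where "Bg = holder_sn (\<beta> + 1) g"
  define Bh where "Bh = holder_sn (\<beta> + 3/2) h"
  have Bg0: "0 \<le> Bg" unfolding Bg_def by (rule sn_nonneg[OF fg])
  have Bh0: "0 \<le> Bh" unfolding Bh_def by (rule sn_nonneg[OF fh])
  have hqg: "\<And>x y. x \<noteq> y \<Longrightarrow> holder_quot (\<beta> + 1) g x y \<le> Bg" unfolding Bg_def by (rule hq_of_fin[OF fg])
  have hqh: "\<And>x y. x \<noteq> y \<Longrightarrow> holder_quot (\<beta> + 3/2) h x y \<le> Bh" unfolding Bh_def by (rule hq_of_fin[OF fh])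
  have dec: "integral unitsq (\<lambda>z. f z * phi n1 n2 x z) = c - integral unitsq (\<lambda>z. g z * part1 (phi n1 n2 x) z)
      - integral unitsq (\<lambda>z. h z * part2 (phi n1 n2 x) z)" for n1 n2 x
    using dc phi_smooth[of n1 n2 x] phi_periodic[of n1 n2 x] int_phi[of n1 n2 x] unfolding decomp1_def by simp
  have b: "\<bar>integral unitsq (\<lambda>z. f z * phi n1 n2 x z) - c\<bar> \<le> 84*pi^2*(Bg*(2*real n1+2) powr (-\<beta>/2) + Bh*(2*real n2+2) powr (-\<beta>/3))" for n1 n2 x
  proof -
    have G: "\<bar>integral unitsq (\<lambda>z. g z * part1 (phi n1 n2 x) z)\<bar> \<le> Bg * 14 * (6 * pi * (2*real n1+2) powr ((1-(\<beta>+1))/2))"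
      by (rule termG1[OF pg hqg]) (use True be in auto)
    have H: "\<bar>integral unitsq (\<lambda>z. h z * part2 (phi n1 n2 x) z)\<bar> \<le> Bh * 14 * (6 * pi * (2*real n2+2) powr ((1-2*(\<beta>+3/2)/3)/2))"
      by (rule termH[OF ph hqh]) (use True be in auto)
    have x1: "(1-(\<beta>+1))/2 = -\<beta>/2" and x2: "(1-2*(\<beta>+3/2)/3)/2 = -\<beta>/3" by (simp_all add: field_simps)
    define P where "P = Bg*(2*real n1+2) powr (-\<beta>/2) + Bh*(2*real n2+2) powr (-\<beta>/3)"
    have P0: "0 \<le> P" unfolding P_def using Bg0 Bh0 by simp
    have "\<bar>integral unitsq (\<lambda>z. f z * phi n1 n2 x z) - c\<bar> \<le> 84 * pi * P"
      using G H unfolding dec x1 x2 P_def by (simp add: algebra_simps)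
    also have "\<dots> \<le> 84 * pi^2 * P" using pi_le_sq P0 by (intro mult_right_mono) auto
    finally show ?thesis unfolding P_def .
  qed
  have z: "integral unitsq (\<lambda>z. f z * phi 0 0 x z) = c" for x
    using dec[of 0 0 x] unfolding phi00_parts by simp
  show ?thesis using Bg0 Bh0 b z unfolding eq Bg_def[symmetric] Bh_def[symmetric] by (intro exI[of _ c] exI[of _ Bg] exI[of _ Bh]) auto
next
  case False
  then obtain c g h where eq: "e = \<bar>c\<bar> + holder_sn (\<beta> + 2) g + holder_sn (\<beta> + 3/2) h"
    and pg: "periodic2 g" and ph: "periodic2 h" and fg: "holder_fin (\<beta> + 2) g" and fh: "holder_fin (\<beta> + 3/2) h"
    and dc: "decomp2 f c g h"
    using e unfolding neg_set_def by auto
  define Bg where "Bg = holder_sn (\<beta> + 2) g"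
  define Bh where "Bh = holder_sn (\<beta> + 3/2) h"
  have Bg0: "0 \<le> Bg" unfolding Bg_def by (rule sn_nonneg[OF fg])
  have Bh0: "0 \<le> Bh" unfolding Bh_def by (rule sn_nonneg[OF fh])
  have hqg: "\<And>x y. x \<noteq> y \<Longrightarrow> holder_quot (\<beta> + 2) g x y \<le> Bg" unfolding Bg_def by (rule hq_of_fin[OF fg])
  have hqh: "\<And>x y. x \<noteq> y \<Longrightarrow> holder_quot (\<beta> + 3/2) h x y \<le> Bh" unfolding Bh_def by (rule hq_of_fin[OF fh])
  have dec: "integral unitsq (\<lambda>z. f z * phi n1 n2 x z) = c + integral unitsq (\<lambda>z. g z * part1 (part1 (phi n1 n2 x)) z)
      - integral unitsq (\<lambda>z. h z * part2 (phi n1 n2 x) z)" for n1 n2 x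
    using dc phi_smooth[of n1 n2 x] phi_periodic[of n1 n2 x] int_phi[of n1 n2 x] unfolding decomp2_def by simp
  have b: "\<bar>integral unitsq (\<lambda>z. f z * phi n1 n2 x z) - c\<bar> \<le> 84*pi^2*(Bg*(2*real n1+2) powr (-\<beta>/2) + Bh*(2*real n2+2) powr (-\<beta>/3))" for n1 n2 x
  proof -
    have G: "\<bar>integral unitsq (\<lambda>z. g z * part1 (part1 (phi n1 n2 x)) z)\<bar> \<le> Bg * 14 * (6 * pi^2 * (2*real n1+2) powr (1 - (\<beta>+2)/2))"
      by (rule termG2[OF pg hqg]) (use False be in auto)
    have H: "\<bar>integral unitsq (\<lambda>z. h z * part2 (phi n1 n2 x) z)\<bar> \<le> Bh * 14 * (6 * pi * (2*real n2+2) powr ((1-2*(\<beta>+3/2)/3)/2))"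
      by (rule termH[OF ph hqh]) (use False be in auto)
    have x1: "1 - (\<beta>+2)/2 = -\<beta>/2" and x2: "(1-2*(\<beta>+3/2)/3)/2 = -\<beta>/3" by (simp_all add: field_simps)
    define P1 where "P1 = Bg*(2*real n1+2) powr (-\<beta>/2)"
    define P2 where "P2 = Bh*(2*real n2+2) powr (-\<beta>/3)"
    have P0: "0 \<le> P2" unfolding P2_def using Bh0 by simp
    have H': "\<bar>integral unitsq (\<lambda>z. h z * part2 (phi n1 n2 x) z)\<bar> \<le> 84 * pi^2 * P2"
    proof -
      have "84 * pi * P2 \<le> 84 * pi^2 * P2" using pi_le_sq P0 by (intro mult_right_mono) auto
      then show ?thesis using H unfolding x2 P2_def by (simp add: algebra_simps)
    qed
    have G': "\<bar>integral unitsq (\<lambda>z. g z * part1 (part1 (phi n1 n2 x)) z)\<bar> \<le> 84 * pi^2 * P1"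
      using G unfolding x1 P1_def by (simp add: algebra_simps)
    show ?thesis using G' H' unfolding dec P1_def P2_def by (simp add: algebra_simps)
  qed
  have z: "integral unitsq (\<lambda>z. f z * phi 0 0 x z) = c" for x
    using dec[of 0 0 x] unfolding phi00_parts(3) unfolding phi00_parts(2) by simp
  show ?thesis using Bg0 Bh0 b z unfolding eq Bg_def[symmetric] Bh_def[symmetric] by (intro exI[of _ c] exI[of _ Bg] exI[of _ Bh]) auto
qed

lemma neg_set_nonneg:
  assumes "-3/2 < \<beta>" "\<beta> < 0" "e \<in> neg_set \<beta> f"
  shows "0 \<le> e"
  using E2_from_neg[OF assms] by auto

lemma phi00: "phi 0 0 x = (\<lambda>z. 1)" unfolding phi_def kc_def by simp

lemma f_est:
  fixes f :: "real \<times> real \<Rightarrow> real"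
  assumes ab: "-3/2 < \<beta>" "\<beta> < 0" "0 < \<alpha>" "\<alpha> < 3/2"
    and per: "periodic2 f" and hf: "holder_fin \<alpha> f" and e: "e \<in> neg_set \<beta> f" and \<delta>: "0 < \<delta>"
  shows "\<exists>c. integral unitsq f = c \<and>
    (\<forall>z. \<bar>f z - c\<bar> \<le> (168*pi^2*(2 + 2 powr \<alpha>)) * (e+\<delta>) powr (\<alpha>/(\<alpha>-\<beta>)) * holder_sn \<alpha> f powr (1 - \<alpha>/(\<alpha>-\<beta>))) \<and>
    (\<forall>x y \<gamma>. 0 < \<gamma> \<longrightarrow> \<gamma> < \<alpha> \<longrightarrow> x \<noteq> y \<longrightarrow> holder_quot \<gamma> f x y \<le>
       (2*(168*pi^2*(2 + 2 powr \<alpha>)) + (2*(168*pi^2)+1)*(2 + 2 powr (\<alpha>-1)) + 1) * (e+\<delta>) powr ((\<alpha>-\<gamma>)/(\<alpha>-\<beta>)) * holder_sn \<alpha> f powr (1 - (\<alpha>-\<gamma>)/(\<alpha>-\<beta>)))"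
proof -
  define A where "A = holder_sn \<alpha> f"
  define K where "K = 168*pi^2"
  define K0 where "K0 = K*(2 + 2 powr \<alpha>)"
  define K1 where "K1 = (2*K+1)*(2 + 2 powr (\<alpha>-1))"
  have K0p: "0 \<le> K" "0 \<le> K0" "0 \<le> K1" unfolding K_def K0_def K1_def by auto
  have hq: "\<And>x y. x \<noteq> y \<Longrightarrow> holder_quot \<alpha> f x y \<le> A" unfolding A_def by (rule hq_of_fin[OF hf])
  have A0: "0 \<le> A" unfolding A_def by (rule sn_nonneg[OF hf])
  obtain c Bg Bh where B: "0 \<le> Bg" "0 \<le> Bh" "Bg + Bh \<le> e"
    and E2: "\<And>n1 n2 x. \<bar>integral unitsq (\<lambda>z. f z * phi n1 n2 x z) - c\<bar> \<le> 84*pi^2*(Bg*(2*real n1+2) powr (-\<beta>/2) + Bh*(2*real n2+2) powr (-\<beta>/3))"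
    and Z: "\<And>x. integral unitsq (\<lambda>z. f z * phi 0 0 x z) = c"
    using E2_from_neg[OF ab(1,2) e] by blast
  have e0: "0 \<le> e" using B by simp
  have intf: "integral unitsq f = c" using Z[of 0] unfolding phi00 by simp
  have E1': "\<And>n1 n2 x. \<bar>integral unitsq (\<lambda>z. f z * phi n1 n2 x z) - f x\<bar>
     \<le> A * 14 * (2 * (2*real n1+2) powr (-\<alpha>/2) + 2 * (2*real n2+2) powr (-(2*\<alpha>/3)/2))"
    by (rule E1[OF per hq]) (use ab in auto)
  define N where "N = e + \<delta>"
  have N0: "0 < N" unfolding N_def using e0 \<delta> by simp
  have core: "\<bar>f x - c\<bar> \<le> K * (A * t powr \<alpha> + N * t powr \<beta>)" if t: "0 < t" "t \<le> 1/2" for t x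
  proof -
    have "\<bar>f x - c\<bar> \<le> 168 * pi^2 * (A * t powr \<alpha> + (Bg + Bh) * t powr \<beta>)"
      by (rule core_bound[OF E1' E2 A0 B(1,2)]) (use ab t in auto)
    also have "(Bg + Bh) * t powr \<beta> \<le> N * t powr \<beta>" unfolding N_def using B \<delta> by (intro mult_right_mono) auto
    then have "168 * pi^2 * (A * t powr \<alpha> + (Bg + Bh) * t powr \<beta>) \<le> K * (A * t powr \<alpha> + N * t powr \<beta>)"
      unfolding K_def by (intro mult_left_mono) auto
    finally show ?thesis .
  qed
  have C0: "\<bar>f x - c\<bar> \<le> K * A" for x
  proof -
    have "\<bar>c - f x\<bar> \<le> A * 14 * (2 * 2 powr (-\<alpha>/2) + 2 * 2 powr (-(2*\<alpha>/3)/2))"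
      using E1'[of 0 0 x] Z[of x] by simp
    also have "2 * 2 powr (-\<alpha>/2) + 2 * 2 powr (-(2*\<alpha>/3)/2) \<le> (4::real)"
    proof -
      have "(2::real) powr (-\<alpha>/2) \<le> 1" "(2::real) powr (-(2*\<alpha>/3)/2) \<le> 1" using ab powr_mono[of "-\<alpha>/2" 0 "2::real"] powr_mono[of "-(2*\<alpha>/3)/2" 0 "2::real"] by auto
      then show ?thesis by simp
    qed
    then have "A * 14 * (2 * 2 powr (-\<alpha>/2) + 2 * 2 powr (-(2*\<alpha>/3)/2)) \<le> A * 14 * 4" using A0 by (intro mult_left_mono) auto
    also have "A * 14 * 4 \<le> K * A"
    proof -
      have "1 \<le> pi^2" using pi_gt3 by (intro one_le_power) simp
      then have "56 \<le> K" unfolding K_def by simp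
      then have "A * 56 \<le> A * K" using A0 by (rule mult_left_mono)
      then show ?thesis by (simp add: mult.commute)
    qed
    finally show ?thesis by simp
  qed
  have lam1: "(\<alpha>-\<gamma>)/(\<alpha>-\<beta>) < 1" if "0 < \<gamma>" for \<gamma> using that ab by (simp add: divide_less_eq)
  have mu1: "\<alpha>/(\<alpha>-\<beta>) < 1" using ab by (simp add: divide_less_eq)
  show ?thesis
  proof (cases "A = 0")
    case True
    have fc: "f z = c" for z using C0[of z] True by simp
    have D0: "1 < \<alpha> \<Longrightarrow> part1 f x = 0" for x using D_bound[OF per hq] True by fastforce
    have S: "\<bar>f z - c\<bar> \<le> K0 * N powr (\<alpha>/(\<alpha>-\<beta>)) * A powr (1 - \<alpha>/(\<alpha>-\<beta>))" for z using fc K0p by simp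
    have H: "holder_quot \<gamma> f x y \<le> (2*K0 + K1 + 1) * N powr ((\<alpha>-\<gamma>)/(\<alpha>-\<beta>)) * A powr (1 - (\<alpha>-\<gamma>)/(\<alpha>-\<beta>))"
      if "0 < \<gamma>" "\<gamma> < \<alpha>" "x \<noteq> y" for x y \<gamma>
    proof -
      have "holder_quot \<gamma> f x y = 0" unfolding holder_quot_def using fc D0 that by auto
      then show ?thesis using K0p by simp
    qed
    show ?thesis using intf S H unfolding A_def N_def K0_def K1_def K_def by blast
  next
    case False
    then have Ap: "0 < A" using A0 by simp
    define L where "L = (N/A) powr (1/(\<alpha> - \<beta>))"
    have L0: "0 < L" unfolding L_def using Ap N0 by simp
    have S: "\<bar>f z - c\<bar> \<le> K0 * A * L powr \<alpha>" for z
    proof -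
      have "\<bar>f z - c\<bar> \<le> K * (2 + 2 powr \<alpha>) * A * L powr \<alpha>"
        by (rule opt[OF Ap N0 ab(3) ab(2) K0p(1) C0 core L_def])
      then show ?thesis unfolding K0_def .
    qed
    have Dd: "\<forall>z. \<bar>part1 f z\<bar> \<le> K1 * A * L powr (\<alpha> - 1)" if a1: "1 < \<alpha>"
    proof
      fix z
      have XA: "\<bar>part1 f z\<bar> \<le> (2*K+1) * A"
      proof -
        have "\<bar>part1 f z\<bar> \<le> A" by (rule D_bound[OF per hq a1])
        also have "A \<le> (2*K+1) * A" using A0 K0p by (simp add: algebra_simps)
        finally show ?thesis .
      qed
      have Lq: "L = (N/A) powr (1/((\<alpha> - 1) - (\<beta> - 1)))" unfolding L_def by simp
      have "\<bar>part1 f z\<bar> \<le> (2*K+1) * (2 + 2 powr (\<alpha>-1)) * A * L powr (\<alpha>-1)"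
      proof (rule opt[OF Ap N0 _ _ _ XA _ Lq])
        show "0 < \<alpha> - 1" using a1 by simp
        show "\<beta> - 1 < 0" using ab by simp
        show "0 \<le> 2*K+1" using K0p by simp
        show "\<bar>part1 f z\<bar> \<le> (2*K+1) * (A * t powr (\<alpha> - 1) + N * t powr (\<beta> - 1))" if "0 < t" "t \<le> 1/2" for t
          using D_interp[OF hq a1 core K0p(1) A0 less_imp_le[OF N0] that] by simp
      qed
      then show "\<bar>part1 f z\<bar> \<le> K1 * A * L powr (\<alpha> - 1)" unfolding K1_def .
    qed
    have H: "holder_quot \<gamma> f x y \<le> (2*K0 + K1 + 1) * N powr ((\<alpha>-\<gamma>)/(\<alpha>-\<beta>)) * A powr (1 - (\<alpha>-\<gamma>)/(\<alpha>-\<beta>))"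
      if g: "0 < \<gamma>" "\<gamma> < \<alpha>" "x \<noteq> y" for x y \<gamma>
    proof -
      have h1: "holder_quot \<gamma> f x y \<le> (2*K0 + K1 + 1) * A * L powr (\<alpha> - \<gamma>)"
        by (rule holder_interp[OF g(1,2) Ap L0 K0p(2,3) S Dd hq g(3)])
      have h2: "A * L powr (\<alpha> - \<gamma>) = N powr ((\<alpha>-\<gamma>)/(\<alpha>-\<beta>)) * A powr (1 - (\<alpha>-\<gamma>)/(\<alpha>-\<beta>))"
        unfolding L_def by (rule conv_pow[OF Ap N0]) (use ab in simp)
      show ?thesis using h1 h2 by (simp add: mult.assoc)
    qed
    have S': "\<bar>f z - c\<bar> \<le> K0 * N powr (\<alpha>/(\<alpha>-\<beta>)) * A powr (1 - \<alpha>/(\<alpha>-\<beta>))" for z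
    proof -
      have "A * L powr \<alpha> = N powr (\<alpha>/(\<alpha>-\<beta>)) * A powr (1 - \<alpha>/(\<alpha>-\<beta>))"
        unfolding L_def by (rule conv_pow[OF Ap N0]) (use ab in simp)
      then show ?thesis using S[of z] by (simp add: mult.assoc)
    qed
    show ?thesis using intf S' H unfolding A_def N_def K0_def K1_def K_def by blast
  qed
qed

theorem mainTheorem18:
  fixes \<alpha> \<beta> :: real
  assumes "-3/2 < \<beta>" and "\<beta> < 0" and "0 < \<alpha>" and "\<alpha> < 3/2"
  shows "(\<forall>\<gamma>. 0 < \<gamma> \<and> \<gamma> < \<alpha> \<longrightarrow>
           (\<exists>C>0. \<forall>f. periodic2 f \<and> holder_fin \<alpha> f \<and> neg_fin \<beta> f \<longrightarrow>
              holder_fin \<gamma> f \<and>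
              holder_sn \<gamma> f \<le> C * neg_sn \<beta> f powr ((\<alpha> - \<gamma>) / (\<alpha> - \<beta>))
                                   * holder_sn \<alpha> f powr (1 - (\<alpha> - \<gamma>) / (\<alpha> - \<beta>))))
       \<and> (\<exists>C>0. \<forall>f. periodic2 f \<and> holder_fin \<alpha> f \<and> neg_fin \<beta> f \<and> integral unitsq f = 0 \<longrightarrow>
              bdd_above (range (\<lambda>x. \<bar>f x\<bar>)) \<and>
              sup_norm f \<le> C * neg_sn \<beta> f powr (\<alpha> / (\<alpha> - \<beta>))
                              * holder_sn \<alpha> f powr (1 - \<alpha> / (\<alpha> - \<beta>)))"
proof -
  define K where "K = 168*pi^2"
  define K0 where "K0 = K*(2 + 2 powr \<alpha>)"
  define K1 where "K1 = (2*K+1)*(2 + 2 powr (\<alpha>-1))"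
  have Kp: "0 < K0" "0 \<le> K1" unfolding K0_def K1_def K_def
    by (auto intro!: mult_pos_pos add_pos_nonneg)
  have ab: "-3/2 < \<beta>" "\<beta> < 0" "0 < \<alpha>" "\<alpha> < 3/2" using assms by auto
  show ?thesis
  proof (intro conjI allI impI)
    fix \<gamma> :: real
    assume g: "0 < \<gamma> \<and> \<gamma> < \<alpha>"
    define lam where "lam = (\<alpha> - \<gamma>) / (\<alpha> - \<beta>)"
    have lam0: "0 < lam" unfolding lam_def using g ab by simp
    show "\<exists>C>0. \<forall>f. periodic2 f \<and> holder_fin \<alpha> f \<and> neg_fin \<beta> f \<longrightarrow>
              holder_fin \<gamma> f \<and>
              holder_sn \<gamma> f \<le> C * neg_sn \<beta> f powr ((\<alpha> - \<gamma>) / (\<alpha> - \<beta>))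
                                   * holder_sn \<alpha> f powr (1 - (\<alpha> - \<gamma>) / (\<alpha> - \<beta>))"
    proof (intro exI[of _ "2*K0 + K1 + 1"] conjI allI impI)
      show "0 < 2*K0 + K1 + 1" using Kp by simp
      fix f :: "real \<times> real \<Rightarrow> real"
      assume hyp: "periodic2 f \<and> holder_fin \<alpha> f \<and> neg_fin \<beta> f"
      then have per: "periodic2 f" and hf: "holder_fin \<alpha> f" and nf: "neg_set \<beta> f \<noteq> {}"
        unfolding neg_fin_def by auto
      define A where "A = holder_sn \<alpha> f"
      have A0: "0 \<le> A" unfolding A_def by (rule sn_nonneg[OF hf])
      have Q: "holder_quot \<gamma> f x y \<le> (2*K0 + K1 + 1) * (e+\<delta>) powr lam * A powr (1 - lam)"
        if "e \<in> neg_set \<beta> f" "0 < \<delta>" "x \<noteq> y" for e \<delta> x y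
        using f_est[OF ab per hf that(1,2)] g that(3) unfolding lam_def A_def K0_def K1_def K_def by blast
      obtain e0 where e0: "e0 \<in> neg_set \<beta> f" using nf by blast
      have ne: "{holder_quot \<gamma> f x y | x y. x \<noteq> y} \<noteq> {}" by (auto intro!: exI[of _ "(0,0)"] exI[of _ "(1,0)"])
      have bdd: "bdd_above {holder_quot \<gamma> f x y | x y. x \<noteq> y}"
        by (rule bdd_aboveI[of _ "(2*K0 + K1 + 1) * (e0+1) powr lam * A powr (1 - lam)"]) (use Q[OF e0] in auto)
      show "holder_fin \<gamma> f"
        unfolding holder_fin_def using hf g bdd unfolding holder_fin_def by auto
      have "holder_sn \<gamma> f \<le> (2*K0 + K1 + 1) * Inf (neg_set \<beta> f) powr lam * A powr (1 - lam)"
        unfolding holder_sn_def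
      proof (rule cSup_least[OF ne])
        fix q assume "q \<in> {holder_quot \<gamma> f x y | x y. x \<noteq> y}"
        then obtain x y where q: "q = holder_quot \<gamma> f x y" "x \<noteq> y" by blast
        show "q \<le> (2*K0 + K1 + 1) * Inf (neg_set \<beta> f) powr lam * A powr (1 - lam)"
          unfolding q(1)
          by (rule inf_step[OF nf neg_set_nonneg[OF ab(1,2)] lam0]) (use Kp Q q(2) in auto)
      qed
      then show "holder_sn \<gamma> f \<le> (2*K0 + K1 + 1) * neg_sn \<beta> f powr ((\<alpha> - \<gamma>) / (\<alpha> - \<beta>))
                                   * holder_sn \<alpha> f powr (1 - (\<alpha> - \<gamma>) / (\<alpha> - \<beta>))"
        unfolding neg_sn_def lam_def A_def .
    qed
  next
    define mu where "mu = \<alpha> / (\<alpha> - \<beta>)"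
    have mu0: "0 < mu" unfolding mu_def using ab by simp
    show "\<exists>C>0. \<forall>f. periodic2 f \<and> holder_fin \<alpha> f \<and> neg_fin \<beta> f \<and> integral unitsq f = 0 \<longrightarrow>
              bdd_above (range (\<lambda>x. \<bar>f x\<bar>)) \<and>
              sup_norm f \<le> C * neg_sn \<beta> f powr (\<alpha> / (\<alpha> - \<beta>))
                              * holder_sn \<alpha> f powr (1 - \<alpha> / (\<alpha> - \<beta>))"
    proof (intro exI[of _ K0] conjI allI impI)
      show "0 < K0" using Kp by simp
      fix f :: "real \<times> real \<Rightarrow> real"
      assume hyp: "periodic2 f \<and> holder_fin \<alpha> f \<and> neg_fin \<beta> f \<and> integral unitsq f = 0"
      then have per: "periodic2 f" and hf: "holder_fin \<alpha> f" and nf: "neg_set \<beta> f \<noteq> {}"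
        and i0: "integral unitsq f = 0"
        unfolding neg_fin_def by auto
      define A where "A = holder_sn \<alpha> f"
      have A0: "0 \<le> A" unfolding A_def by (rule sn_nonneg[OF hf])
      have Q: "\<bar>f z\<bar> \<le> K0 * (e+\<delta>) powr mu * A powr (1 - mu)"
        if hh: "e \<in> neg_set \<beta> f" "0 < \<delta>" for e \<delta> z
      proof -
        obtain c where c1: "integral unitsq f = c" and c2:
          "\<forall>z. \<bar>f z - c\<bar> \<le> (168*pi^2*(2 + 2 powr \<alpha>)) * (e+\<delta>) powr (\<alpha>/(\<alpha>-\<beta>)) * holder_sn \<alpha> f powr (1 - \<alpha>/(\<alpha>-\<beta>))"
          using f_est[OF ab per hf hh(1,2)] by blast
        have "c = 0" using c1 i0 by simp
        then show ?thesis using spec[OF c2, of z] unfolding mu_def A_def K0_def K_def by simp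
      qed
      obtain e0 where e0: "e0 \<in> neg_set \<beta> f" using nf by blast
      show bdd: "bdd_above (range (\<lambda>x. \<bar>f x\<bar>))"
        by (rule bdd_aboveI[of _ "K0 * (e0+1) powr mu * A powr (1 - mu)"]) (use Q[OF e0] in auto)
      have "sup_norm f \<le> K0 * Inf (neg_set \<beta> f) powr mu * A powr (1 - mu)"
        unfolding sup_norm_def
      proof (rule cSup_least)
        show "range (\<lambda>x. \<bar>f x\<bar>) \<noteq> {}" by simp
        fix q assume "q \<in> range (\<lambda>x. \<bar>f x\<bar>)"
        then obtain z where q: "q = \<bar>f z\<bar>" by blast
        show "q \<le> K0 * Inf (neg_set \<beta> f) powr mu * A powr (1 - mu)"
          unfolding q
          by (rule inf_step[OF nf neg_set_nonneg[OF ab(1,2)] mu0]) (use Kp Q in auto)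
      qed
      then show "sup_norm f \<le> K0 * neg_sn \<beta> f powr (\<alpha> / (\<alpha> - \<beta>))
                              * holder_sn \<alpha> f powr (1 - \<alpha> / (\<alpha> - \<beta>))"
        unfolding neg_sn_def mu_def A_def .
    qed
  qed
qed

end
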